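(* Let $F$ be a $4$-regular graph, let $P$ be a circuit partition of $F$, and let $E\subseteq E(F)$ be such that each circuit of $P$ traverses at most one edge of $E$. If $\Gamma$ is a cycle spanning set of $F-E$, then $\pi_P(\Gamma\setminus P)$ is a cycle spanning set of $\mathrm{Tch}(P)$. If moreover $\Gamma$ is integral, then $\pi_P(\Gamma\setminus P)$ is an integral cycle spanning set of $\mathrm{Tch}(P)$.
   Context: Graphs: $G=(V,H,E,\epsilon)$ with finite sets of vertices $V$ and half-edges $H$, a partition $E$ of $H$ into unordered pairs (edges), and $\epsilon:H\to V$; loops and multiple edges allowed. For $E'\subseteq E(G)$, $G-E'$ is obtained by deleting the edges of $E'$. A directed version orders each edge as (tail, head). A single transition is an unordered pair of distinct half-edges incident with a common vertex; a directed single transition is such an ordered pair. A closed walk is a sequence $((h_1,h_2),\dots,(h_{n-1},h_n))$ of directed single transitions with $\{h_2,h_3\},\{h_4,h_5\},\dots,\{h_n,h_1\}$ edges, up to cyclic shift. For a directed version $D$ and closed walk $W$, $\sigma(D,W)\in\mathbb Z^{E}$ counts, at each edge $e$, traversals of $e$ along its direction minus traversals against it. A circuit is a nonempty closed walk using each half-edge at most once, with orientation forgotten. The cycle space of $D$ is the right null space over $\mathbb Q$ of its vertex-edge incidence matrix (entry $1$ if $v$ is incident to the tail but not head of $e$, $-1$ if to the head but not tail, $0$ otherwise). A cycle basis of $G$ is a set $B$ of closed walks such that the vectors $\sigma(D,W)$, $W\in B$, are pairwise distinct and form a basis of the cycle space of $D$. A cycle spanning set is a set of closed walks containing a cycle basis.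 A cycle spanning set $B$ is integral if $\sigma(D,W)$ lies in the $\mathbb Z$-span of $\{\sigma(D,W'):W'\in B\}$ for every closed walk $W$ of $G$. $F$ is $4$-regular if every vertex is incident with exactly $4$ half-edges. A transition at $v$ is a partition of the four half-edges at $v$ into two single transitions. A circuit partition $P$ is a set of circuits of $F$ such that every half-edge lies in exactly one single transition of exactly one circuit of $P$; $\tau(P)$ is the set of transitions both of whose single transitions occur in circuits of $P$. The touch-graph $\mathrm{Tch}(P)$ has vertex set $P$, half-edge set the set of single transitions occurring in circuits of $P$, edge set $\tau(P)$, and maps each single transition to the circuit containing it. For a closed walk $W$ of $F$, $\pi_P(W)$ is obtained by replacing each directed single transition $(h,h')$ of $W$ by $(s,s')$, where $s,s'$ are the single transitions of circuits of $P$ containing $h,h'$ respectively, and deleting the pairs with $s=s'$; it is a closed walk of $\mathrm{Tch}(P)$ in which each remaining pair $(s,s')$ traverses the edge $\{s,s'\}$ from half-edge $s$ to half-edge $s'$. For a set $S$ of closed walks, $\pi_P(S)$ is the multiset $\{\pi_P(W):W\in S\}$; $\Gamma\setminus P$ denotes $\Gamma$ with (any orientations of) circuits of $P$ removed. *)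

theory Defs
  imports Complex_Main
begin

record ('v, 'h) graph =
  gverts :: "'v set"
  ghalfs :: "'h set"
  gedges :: "'h set set"
  ginc   :: "'h \<Rightarrow> 'v"

definition wf_graph :: "('v, 'h) graph \<Rightarrow> bool" where
  "wf_graph G \<longleftrightarrow> finite (gverts G) \<and> finite (ghalfs G)
     \<and> ginc G ` ghalfs G \<subseteq> gverts G
     \<and> (\<forall>e\<in>gedges G. e \<subseteq> ghalfs G \<and> card e = 2)
     \<and> (\<forall>h\<in>ghalfs G. \<exists>!e. e \<in> gedges G \<and> h \<in> e)"

definition four_regular :: "('v, 'h) graph \<Rightarrow> bool" where
  "four_regular G \<longleftrightarrow> (\<forall>v\<in>gverts G. card {h\<in>ghalfs G. ginc G h = v} = 4)"

definition del_edges :: "('v, 'h) graph \<Rightarrow> 'h set set \<Rightarrow> ('v, 'h) graph" where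
  "del_edges G E' = G\<lparr>ghalfs := ghalfs G - \<Union>E', gedges := gedges G - E'\<rparr>"

text \<open>A directed version: for every edge, its tail half-edge (the other one is the head).\<close>
definition orientation :: "('v, 'h) graph \<Rightarrow> ('h set \<Rightarrow> 'h) \<Rightarrow> bool" where
  "orientation G D \<longleftrightarrow> (\<forall>e\<in>gedges G. D e \<in> e)"

definition head_of :: "('h set \<Rightarrow> 'h) \<Rightarrow> 'h set \<Rightarrow> 'h" where
  "head_of D e = (THE h. h \<in> e \<and> h \<noteq> D e)"

definition inc_mat :: "('v, 'h) graph \<Rightarrow> ('h set \<Rightarrow> 'h) \<Rightarrow> 'v \<Rightarrow> 'h set \<Rightarrow> rat" where
  "inc_mat G D v e =
     (if v = ginc G (D e) \<and> v \<noteq> ginc G (head_of D e) then 1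
      else if v = ginc G (head_of D e) \<and> v \<noteq> ginc G (D e) then -1 else 0)"

definition cycle_space :: "('v, 'h) graph \<Rightarrow> ('h set \<Rightarrow> 'h) \<Rightarrow> ('h set \<Rightarrow> rat) set" where
  "cycle_space G D = {x. (\<forall>e. e \<notin> gedges G \<longrightarrow> x e = 0)
      \<and> (\<forall>v\<in>gverts G. (\<Sum>e\<in>gedges G. inc_mat G D v e * x e) = 0)}"

definition rat_span :: "('e \<Rightarrow> rat) set \<Rightarrow> ('e \<Rightarrow> rat) set" where
  "rat_span X = {(\<lambda>e. \<Sum>x\<in>S. c x * x e) | S c. finite S \<and> S \<subseteq> X}"

definition rat_lin_indep :: "('e \<Rightarrow> rat) set \<Rightarrow> bool" where
  "rat_lin_indep X \<longleftrightarrow> (\<forall>S c. finite S \<and> S \<subseteq> X \<and> (\<lambda>e. \<Sum>x\<in>S. c x * x e) = (\<lambda>e. 0)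
      \<longrightarrow> (\<forall>x\<in>S. c x = 0))"

definition int_span :: "('e \<Rightarrow> int) set \<Rightarrow> ('e \<Rightarrow> int) set" where
  "int_span X = {(\<lambda>e. \<Sum>x\<in>S. c x * x e) | S c. finite S \<and> S \<subseteq> X}"

definition is_basis_of_cycle_space ::
  "('v, 'h) graph \<Rightarrow> ('h set \<Rightarrow> 'h) \<Rightarrow> ('h set \<Rightarrow> rat) set \<Rightarrow> bool" where
  "is_basis_of_cycle_space G D X \<longleftrightarrow>
     X \<subseteq> cycle_space G D \<and> rat_lin_indep X \<and> cycle_space G D \<subseteq> rat_span X"

text \<open>A closed walk ((h1,h2),...,(h_{n-1},h_n)) is a list of directed single transitions
  (pairs of distinct half-edges at a common vertex) such that h2 h3, ..., hn h1 form edges.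
  Cyclic shifts are different lists representing the same closed walk.\<close>
definition closed_walk :: "('v, 'h) graph \<Rightarrow> ('h \<times> 'h) list \<Rightarrow> bool" where
  "closed_walk G w \<longleftrightarrow>
     (\<forall>(a, b)\<in>set w. a \<in> ghalfs G \<and> b \<in> ghalfs G \<and> a \<noteq> b \<and> ginc G a = ginc G b)
     \<and> (\<forall>i<length w. {snd (w ! i), fst (w ! (Suc i mod length w))} \<in> gedges G)"

definition etrav :: "('h \<times> 'h) list \<Rightarrow> ('h \<times> 'h) list" where
  "etrav w = map (\<lambda>i. (snd (w ! i), fst (w ! (Suc i mod length w)))) [0..<length w]"

definition sigma_trav :: "('v, 'h) graph \<Rightarrow> ('h set \<Rightarrow> 'h) \<Rightarrow> ('h \<times> 'h) list \<Rightarrow> 'h set \<Rightarrow> int" where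
  "sigma_trav G D ts e =
     (if e \<in> gedges G then
        sum_list (map (\<lambda>(a, b). if {a, b} = e then (if a = D e then 1 else -1) else 0) ts)
      else 0)"

definition sigma :: "('v, 'h) graph \<Rightarrow> ('h set \<Rightarrow> 'h) \<Rightarrow> ('h \<times> 'h) list \<Rightarrow> 'h set \<Rightarrow> int" where
  "sigma G D w = sigma_trav G D (etrav w)"

definition rat_vec :: "('e \<Rightarrow> int) \<Rightarrow> ('e \<Rightarrow> rat)" where
  "rat_vec x = (\<lambda>e. of_int (x e))"

text \<open>Cycle spanning set, generic in the representation of walks: cw says which objects are
  closed walks, sig D W is the vector sigma(D,W). It must hold for every directed version
  (the notion does not depend on the choice).\<close>
definition cycle_spanning_set ::
  "('v, 'h) graph \<Rightarrow> ('w \<Rightarrow> bool) \<Rightarrow> (('h set \<Rightarrow> 'h) \<Rightarrow> 'w \<Rightarrow> 'h set \<Rightarrow> int) \<Rightarrow> 'w set \<Rightarrow> bool" where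
  "cycle_spanning_set G cw sig \<Gamma> \<longleftrightarrow> (\<forall>W\<in>\<Gamma>. cw W) \<and>
     (\<forall>D. orientation G D \<longrightarrow>
        (\<exists>B\<subseteq>\<Gamma>. inj_on (sig D) B \<and> is_basis_of_cycle_space G D ((\<lambda>W. rat_vec (sig D W)) ` B)))"

definition integral_set ::
  "('v, 'h) graph \<Rightarrow> (('h set \<Rightarrow> 'h) \<Rightarrow> 'w \<Rightarrow> 'h set \<Rightarrow> int) \<Rightarrow> 'w set \<Rightarrow> bool" where
  "integral_set G sig \<Gamma> \<longleftrightarrow>
     (\<forall>D. orientation G D \<longrightarrow>
        (\<forall>W. closed_walk G W \<longrightarrow> sigma G D W \<in> int_span (sig D ` \<Gamma>)))"

definition walk_halfs :: "('h \<times> 'h) list \<Rightarrow> 'h list" where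
  "walk_halfs w = concat (map (\<lambda>(a, b). [a, b]) w)"

definition rev_walk :: "('h \<times> 'h) list \<Rightarrow> ('h \<times> 'h) list" where
  "rev_walk w = rev (map (\<lambda>(a, b). (b, a)) w)"

text \<open>A circuit (orientation and cyclic shift forgotten) is represented by the set of all
  cyclic shifts of both of its orientations.\<close>
definition circ_class :: "('h \<times> 'h) list \<Rightarrow> ('h \<times> 'h) list set" where
  "circ_class w = {rotate k w | k. True} \<union> {rotate k (rev_walk w) | k. True}"

definition is_circuit :: "('v, 'h) graph \<Rightarrow> ('h \<times> 'h) list set \<Rightarrow> bool" where
  "is_circuit G C \<longleftrightarrow> (\<exists>w. closed_walk G w \<and> w \<noteq> [] \<and> distinct (walk_halfs w) \<and> C = circ_class w)"

definition trans_of :: "('h \<times> 'h) list set \<Rightarrow> 'h set set" where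
  "trans_of C = {{a, b} | a b. \<exists>w\<in>C. (a, b) \<in> set w}"

definition traversed :: "('h \<times> 'h) list set \<Rightarrow> 'h set set" where
  "traversed C = {{a, b} | a b. \<exists>w\<in>C. (a, b) \<in> set (etrav w)}"

definition circuit_partition :: "('v, 'h) graph \<Rightarrow> ('h \<times> 'h) list set set \<Rightarrow> bool" where
  "circuit_partition G P \<longleftrightarrow> (\<forall>C\<in>P. is_circuit G C) \<and>
     (\<forall>h\<in>ghalfs G. \<exists>!p. fst p \<in> P \<and> snd p \<in> trans_of (fst p) \<and> h \<in> snd p)"

definition transition_at :: "('v, 'h) graph \<Rightarrow> 'v \<Rightarrow> 'h set set \<Rightarrow> bool" where
  "transition_at G v t \<longleftrightarrow> v \<in> gverts G \<and>
     (\<exists>s1 s2. t = {s1, s2} \<and> card s1 = 2 \<and> card s2 = 2 \<and> s1 \<inter> s2 = {}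
        \<and> s1 \<union> s2 = {h\<in>ghalfs G. ginc G h = v})"

definition tau :: "('v, 'h) graph \<Rightarrow> ('h \<times> 'h) list set set \<Rightarrow> 'h set set set" where
  "tau G P = {t. (\<exists>v. transition_at G v t) \<and> t \<subseteq> \<Union>(trans_of ` P)}"

definition Tch :: "('v, 'h) graph \<Rightarrow> ('h \<times> 'h) list set set \<Rightarrow> (('h \<times> 'h) list set, 'h set) graph" where
  "Tch G P = \<lparr>gverts = P, ghalfs = \<Union>(trans_of ` P), gedges = tau G P,
              ginc = (\<lambda>s. THE C. C \<in> P \<and> s \<in> trans_of C)\<rparr>"

definition st_of :: "('h \<times> 'h) list set set \<Rightarrow> 'h \<Rightarrow> 'h set" where
  "st_of P h = (THE s. \<exists>C\<in>P. s \<in> trans_of C \<and> h \<in> s)"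

text \<open>pi_P(W), given as the sequence of edge traversals (s,s') of Tch(P).\<close>
definition proj :: "('h \<times> 'h) list set set \<Rightarrow> ('h \<times> 'h) list \<Rightarrow> ('h set \<times> 'h set) list" where
  "proj P w = filter (\<lambda>(s, s'). s \<noteq> s') (map (\<lambda>(a, b). (st_of P a, st_of P b)) w)"

definition trav_closed_walk :: "('v, 'h) graph \<Rightarrow> ('h \<times> 'h) list \<Rightarrow> bool" where
  "trav_closed_walk G ts \<longleftrightarrow> (\<forall>(a, b)\<in>set ts. {a, b} \<in> gedges G) \<and>
     (\<forall>i<length ts. ginc G (snd (ts ! i)) = ginc G (fst (ts ! (Suc i mod length ts))))"

text \<open>Gamma \ P: remove the walks that are (any orientation / cyclic shift of) circuits of P.\<close>
definition remove_circuits :: "('h \<times> 'h) list set \<Rightarrow> ('h \<times> 'h) list set set \<Rightarrow> ('h \<times> 'h) list set" where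
  "remove_circuits \<Gamma> P = {W\<in>\<Gamma>. \<forall>C\<in>P. W \<notin> C}"

end

theory Submission
  imports Defs "HOL-Library.Function_Algebras"
begin

definition fscale :: "rat \<Rightarrow> ('e \<Rightarrow> rat) \<Rightarrow> ('e \<Rightarrow> rat)" where
  "fscale c f = (\<lambda>x. c * f x)"

interpretation fv: vector_space "fscale :: rat \<Rightarrow> ('e \<Rightarrow> rat) \<Rightarrow> _"
  by unfold_locales (auto simp: fscale_def algebra_simps fun_eq_iff)

lemma sum_fun_apply: "(\<Sum>v\<in>T. f v) x = (\<Sum>v\<in>T. f v x)"
  by (induction T rule: infinite_finite_induct) auto

lemma rat_span_eq: "rat_span X = fv.span X"
  unfolding rat_span_def fv.span_explicit
  by (auto simp: fscale_def sum_fun_apply fun_eq_iff)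

lemma rat_lin_indep_eq: "rat_lin_indep X = fv.independent X"
  unfolding rat_lin_indep_def fv.dependent_explicit
  by (auto simp: fscale_def sum_fun_apply fun_eq_iff)

lemma cyc_iff:
  "(\<forall>i<length xs. R (xs!i) (xs!(Suc i mod length xs))) \<longleftrightarrow>
     successively R xs \<and> (xs \<noteq> [] \<longrightarrow> R (last xs) (hd xs))"
proof (cases "xs = []")
  case True then show ?thesis by simp
next
  case False
  define n where "n = length xs"
  have n: "n > 0" using False n_def by simp
  have "(\<forall>i<n. R (xs!i) (xs!(Suc i mod n))) \<longleftrightarrow>
        (\<forall>i. Suc i < n \<longrightarrow> R (xs!i) (xs!Suc i)) \<and> R (xs!(n-1)) (xs!0)"
  proof safe
    fix i assume a: "\<forall>i<n. R (xs!i) (xs!(Suc i mod n))" "Suc i < n"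
    then show "R (xs!i) (xs!Suc i)" using a(1)[rule_format, of i] by simp
  next
    assume a: "\<forall>i<n. R (xs!i) (xs!(Suc i mod n))"
    then show "R (xs!(n-1)) (xs!0)" using n a[rule_format, of "n-1"] by simp
  next
    fix i assume a: "\<forall>i. Suc i < n \<longrightarrow> R (xs!i) (xs!Suc i)" "R (xs!(n-1)) (xs!0)" "i < n"
    show "R (xs!i) (xs!(Suc i mod n))"
    proof (cases "Suc i < n")
      case True then show ?thesis using a by simp
    next
      case False then have "Suc i = n" using a(3) by auto
      then have "i = n - 1" "Suc i mod n = 0" by auto
      then show ?thesis using a by simp
    qed
  qed
  moreover have "last xs = xs!(n-1)" "hd xs = xs!0" using False n_def
    by (auto simp: last_conv_nth hd_conv_nth)
  ultimately show ?thesis using False unfolding n_def successively_conv_nth by auto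
qed

lemma sum_rot: "(\<Sum>i<n. g (Suc i mod n)) = (\<Sum>i<n. (g i :: 'a::comm_monoid_add))"
proof (cases n)
  case 0 then show ?thesis by simp
next
  case (Suc m)
  have "(\<Sum>i<Suc m. g (Suc i mod Suc m)) = (\<Sum>i<m. g (Suc i mod Suc m)) + g 0"
    by (simp add: sum.lessThan_Suc)
  also have "(\<Sum>i<m. g (Suc i mod Suc m)) = (\<Sum>i<m. g (Suc i))"
    by (rule sum.cong) auto
  also have "(\<Sum>i<m. g (Suc i)) + g 0 = (\<Sum>i<Suc m. g i)"
    by (simp only: sum.lessThan_Suc_shift add.commute)
  finally show ?thesis using Suc by simp
qed

lemma head_of_props:
  assumes "card e = 2" "D e \<in> e"
  shows "head_of D e \<in> e" "head_of D e \<noteq> D e" "e = {D e, head_of D e}"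
proof -
  obtain x y where e: "e = {x, y}" "x \<noteq> y" using assms(1) card_2_iff by metis
  have ex: "\<exists>!h. h \<in> e \<and> h \<noteq> D e" using e assms(2) by auto
  then have "head_of D e \<in> e \<and> head_of D e \<noteq> D e"
    unfolding head_of_def by (rule theI')
  then show "head_of D e \<in> e" "head_of D e \<noteq> D e" by auto
  then show "e = {D e, head_of D e}" using e assms(2) by auto
qed

lemma inc_mat_sign:
  assumes "card {a, b} = 2" "D {a, b} \<in> {a, b}"
  shows "inc_mat G D v {a, b} * (if a = D {a, b} then 1 else -1) =
    (if ginc G a = v then 1 else 0) - (if ginc G b = v then 1 else 0)"
proof -
  have ab: "a \<noteq> b" using assms(1) by auto
  note h = head_of_props[of "{a,b}" D, OF assms]
  show ?thesis
  proof (cases "a = D {a, b}")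
    case True
    then have "head_of D {a,b} = b" using h ab by auto
    then show ?thesis using True unfolding inc_mat_def by auto
  next
    case False
    then have "D {a,b} = b" "head_of D {a,b} = a" using h ab assms(2) by auto
    then show ?thesis using False unfolding inc_mat_def by auto
  qed
qed

lemma of_int_sum_list_nth:
  "(of_int (sum_list (map f xs)) :: rat) = (\<Sum>i<length xs. of_int (f (xs!i)))"
  by (simp add: sum_list_sum_nth atLeast0LessThan of_int_sum)

lemma trav_cycle_space:
  assumes tw: "trav_closed_walk G ts" and D: "orientation G D"
    and c2: "\<forall>e\<in>gedges G. card e = 2"
  shows "rat_vec (sigma_trav G D ts) \<in> cycle_space G D"
  unfolding cycle_space_def
proof (intro CollectI conjI allI impI ballI)
  fix e assume "e \<notin> gedges G" then show "rat_vec (sigma_trav G D ts) e = 0"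
    by (simp add: rat_vec_def sigma_trav_def)
next
  fix v assume v: "v \<in> gverts G"
  show "(\<Sum>e\<in>gedges G. inc_mat G D v e * rat_vec (sigma_trav G D ts) e) = 0"
  proof (cases "finite (gedges G)")
    case False then show ?thesis by simp
  next
    case fin: True
    define n where "n = length ts"
    define f where "f e = (\<lambda>(a, b). if {a, b} = e then (if a = D e then 1 else -1) else (0::int))" for e
    define g where "g i = (if ginc G (fst (ts!i)) = v then 1 else 0) - (if ginc G (snd (ts!i)) = v then 1 else (0::rat))" for i
    have "(\<Sum>e\<in>gedges G. inc_mat G D v e * rat_vec (sigma_trav G D ts) e)
        = (\<Sum>e\<in>gedges G. \<Sum>i<n. inc_mat G D v e * of_int (f e (ts!i)))"
      by (rule sum.cong) (auto simp: rat_vec_def sigma_trav_def f_def[symmetric] of_int_sum_list_nth n_def sum_distrib_left)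
    also have "\<dots> = (\<Sum>i<n. \<Sum>e\<in>gedges G. inc_mat G D v e * of_int (f e (ts!i)))"
      by (rule sum.swap)
    also have "\<dots> = (\<Sum>i<n. g i)"
    proof (rule sum.cong)
      fix i assume "i \<in> {..<n}"
      then have i: "i < n" by simp
      obtain a b where ab: "ts!i = (a, b)" by fastforce
      have ed: "{a, b} \<in> gedges G" using tw i ab unfolding trav_closed_walk_def n_def
        by (metis (mono_tags, lifting) case_prodD nth_mem)
      have "(\<Sum>e\<in>gedges G. inc_mat G D v e * of_int (f e (ts!i)))
          = (\<Sum>e\<in>gedges G. if {a,b} = e then inc_mat G D v {a,b} * (if a = D {a,b} then 1 else -1) else 0)"
        by (rule sum.cong[OF refl]) (simp add: f_def ab)
      also have "\<dots> = inc_mat G D v {a,b} * (if a = D {a,b} then 1 else -1)"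
        using ed fin by (simp add: sum.delta')
      also have "\<dots> = g i"
      proof -
        have "card {a,b} = 2" using c2 ed by (rule bspec)
        moreover have "D {a,b} \<in> {a,b}" using D ed unfolding orientation_def by (rule bspec)
        ultimately have "inc_mat G D v {a, b} * (if a = D {a, b} then 1 else -1) =
          (if ginc G a = v then 1 else 0) - (if ginc G b = v then 1 else 0)" by (rule inc_mat_sign)
        then show ?thesis unfolding g_def ab by simp
      qed
      finally show "(\<Sum>e\<in>gedges G. inc_mat G D v e * of_int (f e (ts!i))) = g i" .
    qed simp
    also have "\<dots> = 0"
    proof -
      have eq: "ginc G (snd (ts!i)) = ginc G (fst (ts!(Suc i mod n)))" if "i < n" for i
        using tw that unfolding trav_closed_walk_def n_def by blast
      have "(\<Sum>i<n. g i) = (\<Sum>i<n. (if ginc G (fst (ts!i)) = v then 1 else 0)) - (\<Sum>i<n. (if ginc G (fst (ts!(Suc i mod n))) = v then 1 else (0::rat)))"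
        unfolding sum_subtractf[symmetric] by (rule sum.cong[OF refl]) (simp add: g_def eq)
      also have "\<dots> = 0" using sum_rot[of "\<lambda>j. (if ginc G (fst (ts!j)) = v then 1 else (0::rat))" n] by simp
      finally show ?thesis .
    qed
    finally show ?thesis .
  qed
qed

definition nb_walk :: "('v, 'h) graph \<Rightarrow> ('h \<times> 'h) list \<Rightarrow> bool" where
  "nb_walk G ts \<longleftrightarrow> trav_closed_walk G ts \<and>
     (\<forall>i<length ts. snd (ts!i) \<noteq> fst (ts!(Suc i mod length ts)))"

definition gwf :: "('v, 'h) graph \<Rightarrow> bool" where
  "gwf G \<longleftrightarrow> finite (gverts G) \<and> finite (gedges G)
     \<and> (\<forall>e\<in>gedges G. card e = 2 \<and> e \<subseteq> ghalfs G)
     \<and> ginc G ` ghalfs G \<subseteq> gverts G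
     \<and> (\<forall>h e e'. e \<in> gedges G \<longrightarrow> e' \<in> gedges G \<longrightarrow> h \<in> e \<longrightarrow> h \<in> e' \<longrightarrow> e = e')"

lemma cycle_space_diff_scale:
  assumes "x \<in> cycle_space G D" "y \<in> cycle_space G D"
  shows "(\<lambda>e. x e - c * y e) \<in> cycle_space G D"
proof -
  have "(\<Sum>e\<in>gedges G. inc_mat G D v e * (x e - c * y e)) =
     (\<Sum>e\<in>gedges G. inc_mat G D v e * x e) - c * (\<Sum>e\<in>gedges G. inc_mat G D v e * y e)" for v
    by (simp add: sum_subtractf sum_distrib_left algebra_simps)
  then show ?thesis using assms unfolding cycle_space_def by auto
qed

lemma step_exists:
  assumes G: "gwf G" and D: "orientation G D" and x: "x \<in> cycle_space G D"
    and nl: "\<forall>e\<in>gedges G. x e \<noteq> 0 \<longrightarrow> (\<forall>a b. e = {a,b} \<longrightarrow> ginc G a \<noteq> ginc G b)"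
    and ab: "{a, b} \<in> gedges G" "x {a, b} \<noteq> 0"
  shows "\<exists>a' b'. {a', b'} \<in> gedges G \<and> x {a', b'} \<noteq> 0 \<and> {a', b'} \<noteq> {a, b} \<and> ginc G a' = ginc G b"
proof -
  define v where "v = ginc G b"
  have fin: "finite (gedges G)" using G unfolding gwf_def by auto
  have c2: "card {a,b} = 2" using G ab unfolding gwf_def by auto
  then have anb: "a \<noteq> b" by auto
  have bh: "b \<in> ghalfs G" using G ab unfolding gwf_def by auto
  then have vV: "v \<in> gverts G" using G unfolding gwf_def v_def by auto
  have gab: "ginc G a \<noteq> ginc G b" using nl ab by blast
  have Dab: "D {a,b} \<in> {a,b}" using D ab unfolding orientation_def by blast
  note h = head_of_props[of "{a,b}" D, OF c2 Dab]
  have inc1: "inc_mat G D v {a,b} \<noteq> 0"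
  proof (cases "D {a,b} = a")
    case True then have "head_of D {a,b} = b" using h anb by auto
    then show ?thesis using True gab unfolding inc_mat_def v_def by auto
  next
    case False then have "D {a,b} = b" "head_of D {a,b} = a" using h anb Dab by auto
    then show ?thesis using gab unfolding inc_mat_def v_def by auto
  qed
  have "(\<Sum>e\<in>gedges G. inc_mat G D v e * x e) = 0" using x vV unfolding cycle_space_def by blast
  then have "inc_mat G D v {a,b} * x {a,b} + (\<Sum>e\<in>gedges G - {{a,b}}. inc_mat G D v e * x e) = 0"
    using fin ab by (simp add: sum.remove)
  then have "(\<Sum>e\<in>gedges G - {{a,b}}. inc_mat G D v e * x e) \<noteq> 0" using inc1 ab by auto
  then obtain e where e0: "e \<in> gedges G - {{a,b}}" "inc_mat G D v e * x e \<noteq> 0"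
    by (meson sum.neutral)
  then have e: "e \<in> gedges G" "e \<noteq> {a,b}" "inc_mat G D v e * x e \<noteq> 0" by auto
  have c2e: "card e = 2" using G e unfolding gwf_def by auto
  have De: "D e \<in> e" using D e unfolding orientation_def by blast
  note he = head_of_props[of e D, OF c2e De]
  have "inc_mat G D v e \<noteq> 0" "x e \<noteq> 0" using e by auto
  then have "v = ginc G (D e) \<or> v = ginc G (head_of D e)" unfolding inc_mat_def by (auto split: if_splits)
  then show ?thesis
  proof
    assume "v = ginc G (D e)"
    then show ?thesis using e he(1,2) he(3)[symmetric] \<open>x e \<noteq> 0\<close> v_def
      by (intro exI[of _ "D e"] exI[of _ "head_of D e"]) simp
  next
    assume "v = ginc G (head_of D e)"
    moreover have "{head_of D e, D e} = e" using he(3) by auto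
    ultimately show ?thesis using e \<open>x e \<noteq> 0\<close> v_def
      by (intro exI[of _ "head_of D e"] exI[of _ "D e"]) simp
  qed
qed

lemma sigma_trav_nz:
  assumes "sigma_trav G D ts e \<noteq> 0"
  shows "e \<in> gedges G \<and> (\<exists>(a, b)\<in>set ts. {a, b} = e)"
proof -
  have e: "e \<in> gedges G" using assms unfolding sigma_trav_def by (auto split: if_splits)
  have "sum_list (map (\<lambda>(a, b). if {a, b} = e then (if a = D e then 1 else -1) else (0::int)) ts) \<noteq> 0"
    using assms e unfolding sigma_trav_def by simp
  then have "\<exists>(a, b)\<in>set ts. {a, b} = e"
  proof (rule contrapos_np)
    assume "\<not> (\<exists>(a, b)\<in>set ts. {a, b} = e)"
    then have m: "map (\<lambda>(a, b). if {a, b} = e then (if a = D e then 1 else -1) else (0::int)) ts = map (\<lambda>_. 0) ts"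
      by (intro map_cong) auto
    then show "sum_list (map (\<lambda>(a, b). if {a, b} = e then (if a = D e then 1 else -1) else (0::int)) ts) = 0"
      unfolding m by (induction ts) auto
  qed
  then show ?thesis using e by blast
qed

lemma sum_list_map_upt: "sum_list (map g (map T [p..<q])) = (\<Sum>m\<in>{p..<q}. g (T m))"
  by (simp add: sum_set_upt_conv_sum_list_nat[symmetric] comp_def)

lemma find_cycle_nonloop:
  assumes G: "gwf G" and D: "orientation G D" and x: "x \<in> cycle_space G D"
    and nl: "\<forall>e\<in>gedges G. x e \<noteq> 0 \<longrightarrow> (\<forall>a b. e = {a,b} \<longrightarrow> ginc G a \<noteq> ginc G b)"
    and e0: "e0 \<in> gedges G" "x e0 \<noteq> 0"
  shows "\<exists>ts e1. nb_walk G ts \<and> e1 \<in> gedges G \<and> sigma_trav G D ts e1 \<noteq> 0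
     \<and> (\<forall>e. sigma_trav G D ts e \<noteq> 0 \<longrightarrow> x e \<noteq> 0)"
proof -
  define good where "good p = ({fst p, snd p} \<in> gedges G \<and> x {fst p, snd p} \<noteq> 0)" for p
  define nxt where "nxt p = (SOME q. good q \<and> {fst q, snd q} \<noteq> {fst p, snd p} \<and> ginc G (fst q) = ginc G (snd p))" for p
  have nxt: "good (nxt p) \<and> {fst (nxt p), snd (nxt p)} \<noteq> {fst p, snd p} \<and> ginc G (fst (nxt p)) = ginc G (snd p)"
    if gp: "good p" for p
  proof -
    obtain a' b' where "{a', b'} \<in> gedges G \<and> x {a', b'} \<noteq> 0 \<and> {a', b'} \<noteq> {fst p, snd p} \<and> ginc G a' = ginc G (snd p)"
      using step_exists[OF G D x nl, of "fst p" "snd p"] gp unfolding good_def by blast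
    then have "\<exists>q. good q \<and> {fst q, snd q} \<noteq> {fst p, snd p} \<and> ginc G (fst q) = ginc G (snd p)"
      unfolding good_def by (intro exI[of _ "(a', b')"]) simp
    then show ?thesis unfolding nxt_def by (rule someI_ex)
  qed
  obtain a0 b0 where ab0: "e0 = {a0, b0}" using G e0 unfolding gwf_def by (meson card_2_iff)
  define T where "T m = (nxt ^^ m) (a0, b0)" for m
  have T0: "T 0 = (a0, b0)" and TS: "T (Suc m) = nxt (T m)" for m unfolding T_def by auto
  define E where "E m = {fst (T m), snd (T m)}" for m
  have goodT: "good (T m)" for m
  proof (induction m)
    case 0 then show ?case using e0 ab0 by (simp add: T0 good_def)
  next
    case (Suc m) then show ?case using nxt[OF Suc] by (simp add: TS)
  qed
  have EG: "E m \<in> gedges G" and Ex: "x (E m) \<noteq> 0" for m using goodT[of m] unfolding good_def E_def by auto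
  have Ene: "E (Suc m) \<noteq> E m" for m using nxt[OF goodT[of m]] unfolding E_def TS by simp
  define u where "u m = ginc G (fst (T m))" for m
  have uS: "u (Suc m) = ginc G (snd (T m))" for m using nxt[OF goodT[of m]] unfolding u_def TS by simp
  have c2: "card (E m) = 2" "E m \<subseteq> ghalfs G" for m using G EG[of m] unfolding gwf_def by auto
  have fs_ne: "fst (T m) \<noteq> snd (T m)" for m using c2(1)[of m] unfolding E_def by (auto simp: card_2_iff)
  have uniq: "E m = E m'" if "h \<in> E m" "h \<in> E m'" for h m m'
    using G EG[of m] EG[of m'] that unfolding gwf_def by blast
  have uV: "u m \<in> gverts G" for m using c2(2)[of m] G unfolding u_def E_def gwf_def by auto
  define N where "N = card (gverts G)"
  have "\<not> inj_on u {..N}"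
  proof
    assume "inj_on u {..N}"
    then have "card (u ` {..N}) = Suc N" by (simp add: card_image)
    moreover have "card (u ` {..N}) \<le> N" unfolding N_def
      using G uV by (intro card_mono) (auto simp: gwf_def)
    ultimately show False by simp
  qed
  then obtain p0 q0 where "p0 \<noteq> q0" "u p0 = u q0" unfolding inj_on_def by blast
  then have "\<exists>q p. p < q \<and> u p = u q" by (metis linorder_neqE_nat)
  define Q where "Q = (LEAST q. \<exists>p<q. u p = u q)"
  have "\<exists>p<Q. u p = u Q" unfolding Q_def using \<open>\<exists>q p. p < q \<and> u p = u q\<close> by (rule LeastI_ex)
  then obtain p where p: "p < Q" "u p = u Q" by blast
  have minQ: "u p' \<noteq> u q'" if "p' < q'" "q' < Q" for p' q'
  proof
    assume "u p' = u q'"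
    then have "\<exists>p<q'. u p = u q'" using that by blast
    then have "Q \<le> q'" unfolding Q_def by (rule Least_le)
    then show False using that by simp
  qed
  have Em_ne: "E m \<noteq> E p" if m: "p < m" "m < Q" for m
  proof
    assume eq: "E m = E p"
    have "fst (T m) \<in> E p" using eq unfolding E_def by auto
    then have "fst (T m) = fst (T p) \<or> fst (T m) = snd (T p)" unfolding E_def by auto
    then show False
    proof
      assume "fst (T m) = fst (T p)" then have "u m = u p" unfolding u_def by simp
      then show False using minQ[of p m] m by simp
    next
      assume "fst (T m) = snd (T p)" then have um: "u m = u (Suc p)" using uS[of p] unfolding u_def by simp
      show False
      proof (cases "m = Suc p")
        case True then show False using eq Ene[of p] by simp
      next
        case False then have "Suc p < m" using m by simp
        then show False using minQ[of "Suc p" m] m um by simp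
      qed
    qed
  qed
  define L where "L = Q - p"
  define ts where "ts = map T [p..<Q]"
  have lts: "length ts = L" unfolding ts_def L_def by simp
  have tsi: "ts!i = T (p+i)" if "i < L" for i using that unfolding ts_def L_def by simp
  have L0: "L > 0" using p unfolding L_def by simp
  have setts: "set ts = T ` {p..<Q}" unfolding ts_def by simp
  have tw: "trav_closed_walk G ts"
    unfolding trav_closed_walk_def
  proof (intro conjI ballI allI impI)
    fix ab assume "ab \<in> set ts"
    then obtain m where "ab = T m" unfolding setts by blast
    then show "case ab of (a, b) \<Rightarrow> {a, b} \<in> gedges G" using EG[of m] unfolding E_def by (cases "T m") simp
  next
    fix i assume i: "i < length ts"
    show "ginc G (snd (ts!i)) = ginc G (fst (ts!(Suc i mod length ts)))"
    proof (cases "Suc i < L")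
      case True
      then show ?thesis using i lts tsi[of i] tsi[of "Suc i"] uS[of "p+i"] unfolding u_def by simp
    next
      case False
      then have "Suc i = L" using i lts by simp
      then have "Suc (p+i) = Q" using p unfolding L_def by simp
      then show ?thesis using \<open>Suc i = L\<close> i lts tsi[of i] tsi[of 0] L0 uS[of "p+i"] p unfolding u_def by simp
    qed
  qed
  have nb: "nb_walk G ts"
    unfolding nb_walk_def
  proof (intro conjI tw allI impI)
    fix i assume i: "i < length ts"
    show "snd (ts!i) \<noteq> fst (ts!(Suc i mod length ts))"
    proof (cases "Suc i < L")
      case True
      have "snd (T (p+i)) \<noteq> fst (T (Suc (p+i)))"
      proof
        assume "snd (T (p+i)) = fst (T (Suc (p+i)))"
        then have "E (p+i) = E (Suc (p+i))" by (intro uniq[of "snd (T (p+i))"]) (auto simp: E_def)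
        then show False using Ene[of "p+i"] by simp
      qed
      then show ?thesis using True lts tsi[of i] tsi[of "Suc i"] by simp
    next
      case False
      then have iL: "Suc i = L" using i lts by simp
      show ?thesis
      proof (cases "i = 0")
        case True then show ?thesis using iL tsi[of 0] fs_ne[of p] lts by simp
      next
        case False
        have "snd (T (p+i)) \<noteq> fst (T p)"
        proof
          assume "snd (T (p+i)) = fst (T p)"
          then have "E (p+i) = E p" by (intro uniq[of "fst (T p)"]) (auto simp: E_def)
          then show False using Em_ne[of "p+i"] False iL unfolding L_def by simp
        qed
        then show ?thesis using iL lts tsi[of i] tsi[of 0] L0 by simp
      qed
    qed
  qed
  define f where "f = (\<lambda>(a, b). if {a, b} = E p then (if a = D (E p) then 1 else -1) else (0::int))"
  have "sigma_trav G D ts (E p) = sum_list (map f ts)"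
    unfolding sigma_trav_def f_def using EG[of p] by simp
  also have "\<dots> = (\<Sum>m\<in>{p..<Q}. f (T m))"
    unfolding ts_def by (rule sum_list_map_upt)
  also have "\<dots> = f (T p) + (\<Sum>m\<in>{Suc p..<Q}. f (T m))"
    using p by (simp add: atLeastLessThanSuc_atLeastAtMost[symmetric] sum.atLeast_Suc_lessThan)
  also have "(\<Sum>m\<in>{Suc p..<Q}. f (T m)) = 0"
  proof (rule sum.neutral, rule ballI)
    fix m assume "m \<in> {Suc p..<Q}"
    then have "E m \<noteq> E p" using Em_ne by simp
    then show "f (T m) = 0" unfolding f_def E_def by (cases "T m") simp
  qed
  finally have "sigma_trav G D ts (E p) \<noteq> 0" unfolding f_def E_def by (cases "T p") simp
  moreover have "x e \<noteq> 0" if sz: "sigma_trav G D ts e \<noteq> 0" for e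
  proof -
    obtain a b where "(a, b) \<in> set ts" "{a, b} = e" using sigma_trav_nz[OF sz] by blast
    then obtain m where "(a, b) = T m" unfolding setts by blast
    then have "e = E m" using \<open>{a, b} = e\<close> unfolding E_def by (metis fst_conv snd_conv)
    then show ?thesis using Ex by simp
  qed
  ultimately show ?thesis using nb EG[of p] by blast
qed

lemma find_cycle:
  assumes G: "gwf G" and D: "orientation G D" and x: "x \<in> cycle_space G D"
    and nz: "x \<noteq> (\<lambda>e. 0)"
  shows "\<exists>ts e1. nb_walk G ts \<and> e1 \<in> gedges G \<and> sigma_trav G D ts e1 \<noteq> 0
     \<and> (\<forall>e. sigma_trav G D ts e \<noteq> 0 \<longrightarrow> x e \<noteq> 0)"
proof -
  obtain e0 where e0x: "x e0 \<noteq> 0" using nz by blast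
  then have e0: "e0 \<in> gedges G" using x unfolding cycle_space_def by blast
  show ?thesis
  proof (cases "\<forall>e\<in>gedges G. x e \<noteq> 0 \<longrightarrow> (\<forall>a b. e = {a,b} \<longrightarrow> ginc G a \<noteq> ginc G b)")
    case True
    show ?thesis by (rule find_cycle_nonloop[OF G D x True e0 e0x])
  next
    case False
    then obtain a b where ab: "{a,b} \<in> gedges G" "x {a,b} \<noteq> 0" "ginc G a = ginc G b" by blast
    have "card {a,b} = 2" using G ab unfolding gwf_def by blast
    then have anb: "a \<noteq> b" by auto
    define ts where "ts = [(a, b)]"
    have nb: "nb_walk G ts" unfolding nb_walk_def trav_closed_walk_def ts_def using ab anb by auto
    have s1: "sigma_trav G D ts {a,b} \<noteq> 0" unfolding sigma_trav_def ts_def using ab by simp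
    have "x e \<noteq> 0" if "sigma_trav G D ts e \<noteq> 0" for e
      using sigma_trav_nz[OF that] ab unfolding ts_def by auto
    then show ?thesis using nb s1 ab by blast
  qed
qed

lemma cycle_space_span:
  assumes G: "gwf G" and D: "orientation G D"
  shows "x \<in> cycle_space G D \<Longrightarrow> x \<in> fv.span {rat_vec (sigma_trav G D ts) | ts. nb_walk G ts}"
proof (induction "card {e\<in>gedges G. x e \<noteq> 0}" arbitrary: x rule: less_induct)
  case less
  let ?S = "{rat_vec (sigma_trav G D ts) | ts. nb_walk G ts}"
  show ?case
  proof (cases "x = (\<lambda>e. 0)")
    case True then show ?thesis using fv.span_zero by (simp add: zero_fun_def)
  next
    case False
    obtain ts e1 where ts: "nb_walk G ts" "e1 \<in> gedges G" "sigma_trav G D ts e1 \<noteq> 0"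
      "\<forall>e. sigma_trav G D ts e \<noteq> 0 \<longrightarrow> x e \<noteq> 0"
      using find_cycle[OF G D less.prems False] by blast
    define y where "y = rat_vec (sigma_trav G D ts)"
    have c2: "\<forall>e\<in>gedges G. card e = 2" using G unfolding gwf_def by blast
    have y: "y \<in> cycle_space G D" unfolding y_def
      by (rule trav_cycle_space[OF _ D c2]) (use ts(1) in \<open>simp add: nb_walk_def\<close>)
    have ye1: "y e1 \<noteq> 0" using ts(3) unfolding y_def rat_vec_def by simp
    define c where "c = x e1 / y e1"
    define x' where "x' = (\<lambda>e. x e - c * y e)"
    have x': "x' \<in> cycle_space G D" unfolding x'_def by (rule cycle_space_diff_scale[OF less.prems y])
    have sub: "{e\<in>gedges G. x' e \<noteq> 0} \<subseteq> {e\<in>gedges G. x e \<noteq> 0} - {e1}"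
    proof
      fix e assume e: "e \<in> {e\<in>gedges G. x' e \<noteq> 0}"
      have "e \<noteq> e1" using e ye1 unfolding x'_def c_def by auto
      moreover have "x e \<noteq> 0"
      proof (rule ccontr)
        assume "\<not> x e \<noteq> 0"
        then have "sigma_trav G D ts e = 0" using ts(4) by blast
        then have "y e = 0" unfolding y_def rat_vec_def by simp
        then show False using e \<open>\<not> x e \<noteq> 0\<close> unfolding x'_def by simp
      qed
      ultimately show "e \<in> {e\<in>gedges G. x e \<noteq> 0} - {e1}" using e by simp
    qed
    have fin: "finite {e\<in>gedges G. x e \<noteq> 0}" using G unfolding gwf_def by simp
    have "e1 \<in> {e\<in>gedges G. x e \<noteq> 0}" using ts(2) ts(4) ts(3) by blast
    then have "card ({e\<in>gedges G. x e \<noteq> 0} - {e1}) < card {e\<in>gedges G. x e \<noteq> 0}"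
      using card_Diff1_less[OF fin] by blast
    then have "card {e\<in>gedges G. x' e \<noteq> 0} < card {e\<in>gedges G. x e \<noteq> 0}"
      using card_mono[OF _ sub] fin by (meson finite_Diff le_less_trans)
    then have x'S: "x' \<in> fv.span ?S" using less.hyps x' by blast
    have yS: "y \<in> fv.span ?S" unfolding y_def using ts(1) by (intro fv.span_base) blast
    have "x = x' + fscale c y" unfolding x'_def fscale_def by (simp add: fun_eq_iff)
    then show ?thesis using x'S yS by (simp add: fv.span_add fv.span_scale)
  qed
qed

lemma walk_halfs_Cons [simp]: "walk_halfs ((a, b) # w) = a # b # walk_halfs w"
  by (simp add: walk_halfs_def)

lemma set_walk_halfs: "set (walk_halfs w) = fst ` set w \<union> snd ` set w"
  by (induction w) (auto simp: walk_halfs_def)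

lemma distinct_walk_halfs:
  "distinct (walk_halfs w) \<longleftrightarrow> distinct (map fst w) \<and> distinct (map snd w)
     \<and> fst ` set w \<inter> snd ` set w = {} \<and> (\<forall>p\<in>set w. fst p \<noteq> snd p)"
proof (induction w)
  case Nil then show ?case by (simp add: walk_halfs_def)
next
  case (Cons p w)
  obtain a b where p: "p = (a, b)" by fastforce
  show ?case using Cons unfolding p by (auto simp: set_walk_halfs image_iff)
qed

lemma trans_of_circ_class: "trans_of (circ_class w) = (\<lambda>(a, b). {a, b}) ` set w"
proof -
  have "(\<exists>w'\<in>circ_class w. (a, b) \<in> set w') \<longleftrightarrow> (a, b) \<in> set w \<or> (b, a) \<in> set w" for a b
  proof
    assume "\<exists>w'\<in>circ_class w. (a, b) \<in> set w'"
    then show "(a, b) \<in> set w \<or> (b, a) \<in> set w"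
      unfolding circ_class_def rev_walk_def by auto
  next
    assume "(a, b) \<in> set w \<or> (b, a) \<in> set w"
    then show "\<exists>w'\<in>circ_class w. (a, b) \<in> set w'"
    proof
      assume "(a, b) \<in> set w"
      then show ?thesis unfolding circ_class_def by (intro bexI[of _ w]) (auto intro: exI[of _ 0])
    next
      assume "(b, a) \<in> set w"
      then have "(a, b) \<in> set (rev_walk w)" unfolding rev_walk_def by force
      then show ?thesis unfolding circ_class_def by (intro bexI[of _ "rev_walk w"]) (auto intro: exI[of _ 0])
    qed
  qed
  then show ?thesis unfolding trans_of_def by (auto simp: insert_commute image_iff)
qed

lemma in_circ_class: "w \<in> circ_class w"
  unfolding circ_class_def by (auto intro: exI[of _ 0])

lemma closed_walk_nth:
  assumes "closed_walk G w" "i < length w"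
  shows "fst (w!i) \<in> ghalfs G" "snd (w!i) \<in> ghalfs G" "fst (w!i) \<noteq> snd (w!i)"
    "ginc G (fst (w!i)) = ginc G (snd (w!i))"
    "{snd (w!i), fst (w!(Suc i mod length w))} \<in> gedges G"
proof -
  obtain a b where ab: "w!i = (a,b)" by fastforce
  then have "(a,b) \<in> set w" using nth_mem assms(2) by metis
  then have "a \<in> ghalfs G \<and> b \<in> ghalfs G \<and> a \<noteq> b \<and> ginc G a = ginc G b"
    using assms(1) unfolding closed_walk_def by blast
  then show "fst (w!i) \<in> ghalfs G" "snd (w!i) \<in> ghalfs G" "fst (w!i) \<noteq> snd (w!i)"
    "ginc G (fst (w!i)) = ginc G (snd (w!i))" using ab by auto
  show "{snd (w!i), fst (w!(Suc i mod length w))} \<in> gedges G" using assms unfolding closed_walk_def by blast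
qed

locale setting =
  fixes F :: "('v, 'h) graph" and P :: "('h \<times> 'h) list set set" and E :: "'h set set"
  assumes wf: "wf_graph F" and reg: "four_regular F" and cp: "circuit_partition F P"
    and EF: "E \<subseteq> gedges F" and E1: "\<forall>C\<in>P. card (traversed C \<inter> E) \<le> 1"
begin

abbreviation "H \<equiv> ghalfs F"
abbreviation "FE \<equiv> del_edges F E"
abbreviation "T \<equiv> Tch F P"
abbreviation "st \<equiv> st_of P"

lemma wf_parts1: "finite (gverts F)" using wf unfolding wf_graph_def by (elim conjE)
lemma wf_parts2: "finite H" using wf unfolding wf_graph_def by (elim conjE)
lemma wf_parts3: "ginc F ` H \<subseteq> gverts F" using wf unfolding wf_graph_def by (elim conjE)
lemma wf_parts4: "\<forall>e\<in>gedges F. e \<subseteq> H \<and> card e = 2" using wf unfolding wf_graph_def by (elim conjE)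
lemma wf_parts5: "\<forall>h\<in>H. \<exists>!e. e \<in> gedges F \<and> h \<in> e" using wf unfolding wf_graph_def by (elim conjE)
lemmas wf_parts = wf_parts1 wf_parts2 wf_parts3 wf_parts4 wf_parts5

lemma edge_props: "e \<in> gedges F \<Longrightarrow> e \<subseteq> H \<and> card e = 2"
  using wf_parts(4) by (rule bspec)

lemma edge_uniq: "e \<in> gedges F \<Longrightarrow> e' \<in> gedges F \<Longrightarrow> h \<in> e \<Longrightarrow> h \<in> e' \<Longrightarrow> e = e'"
proof -
  assume a: "e \<in> gedges F" "e' \<in> gedges F" "h \<in> e" "h \<in> e'"
  then have "h \<in> H" using edge_props by blast
  with wf_parts(5) have "\<exists>!e. e \<in> gedges F \<and> h \<in> e" by (rule bspec)
  then show "e = e'" using a by blast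
qed

lemma edge_other: "{x, z} \<in> gedges F \<Longrightarrow> {x, y} \<in> gedges F \<Longrightarrow> z = y"
proof -
  assume a: "{x, z} \<in> gedges F" "{x, y} \<in> gedges F"
  then have eq: "{x, z} = {x, y}" by (intro edge_uniq[of _ _ x]) auto
  have "card {x, z} = 2" "card {x, y} = 2" using a edge_props by auto
  then have "z \<noteq> x" "y \<noteq> x" by auto
  then show "z = y" using eq by (auto simp: doubleton_eq_iff)
qed

lemma circ_walk:
  assumes "C \<in> P"
  obtains w where "closed_walk F w" "w \<noteq> []" "distinct (walk_halfs w)" "C = circ_class w"
proof -
  have "\<forall>C\<in>P. is_circuit F C" using cp unfolding circuit_partition_def by (elim conjE)
  then have "is_circuit F C" using assms by (rule bspec)
  then show thesis unfolding is_circuit_def using that by blast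
qed

lemma trans_props:
  assumes "C \<in> P" "s \<in> trans_of C"
  shows "\<exists>a b. s = {a, b} \<and> a \<noteq> b \<and> a \<in> H \<and> b \<in> H \<and> ginc F a = ginc F b"
proof -
  obtain w where w: "closed_walk F w" "C = circ_class w" using circ_walk[OF assms(1)] by metis
  then obtain a b where ab: "(a, b) \<in> set w" "s = {a, b}" using assms(2) unfolding w(2) trans_of_circ_class by auto
  then show ?thesis using w(1) unfolding closed_walk_def by blast
qed

lemma trans_card: "C \<in> P \<Longrightarrow> s \<in> trans_of C \<Longrightarrow> card s = 2 \<and> s \<subseteq> H"
proof -
  assume "C \<in> P" "s \<in> trans_of C"
  then obtain a b where "s = {a, b}" "a \<noteq> b" "a \<in> H" "b \<in> H" using trans_props by blast
  then show ?thesis by simp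
qed

lemma st_unique:
  assumes "C \<in> P" "s \<in> trans_of C" "h \<in> s" "C' \<in> P" "s' \<in> trans_of C'" "h \<in> s'"
  shows "C = C' \<and> s = s'"
proof -
  have "h \<in> H" using trans_card assms by blast
  then have "\<exists>!p. fst p \<in> P \<and> snd p \<in> trans_of (fst p) \<and> h \<in> snd p" using cp unfolding circuit_partition_def by blast
  then have "(C, s) = (C', s')" using assms by (metis fst_conv snd_conv)
  then show ?thesis by simp
qed

lemma st_of_eq:
  assumes "C \<in> P" "s \<in> trans_of C" "h \<in> s"
  shows "st h = s"
  unfolding st_of_def
proof (rule the_equality)
  show "\<exists>C\<in>P. s \<in> trans_of C \<and> h \<in> s" using assms by blast
next
  fix s' assume "\<exists>C\<in>P. s' \<in> trans_of C \<and> h \<in> s'"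
  then show "s' = s" using st_unique assms by blast
qed

lemma st_of_ex:
  assumes "h \<in> H"
  shows "\<exists>C\<in>P. st h \<in> trans_of C \<and> h \<in> st h"
proof -
  obtain p where "fst p \<in> P" "snd p \<in> trans_of (fst p)" "h \<in> snd p"
    using cp assms unfolding circuit_partition_def by blast
  then show ?thesis using st_of_eq by metis
qed

lemma tch_ginc: "C \<in> P \<Longrightarrow> s \<in> trans_of C \<Longrightarrow> ginc T s = C"
  unfolding Tch_def
proof (simp, rule the_equality)
  assume "C \<in> P" "s \<in> trans_of C"
  then show "C \<in> P \<and> s \<in> trans_of C" by simp
next
  fix C' assume a: "C \<in> P" "s \<in> trans_of C" "C' \<in> P \<and> s \<in> trans_of C'"
  obtain h where "h \<in> s" using trans_card[OF a(1,2)] by fastforce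
  then show "C' = C" using st_unique a by blast
qed

lemma trans_disj:
  "C \<in> P \<Longrightarrow> s \<in> trans_of C \<Longrightarrow> C' \<in> P \<Longrightarrow> s' \<in> trans_of C' \<Longrightarrow> s \<noteq> s' \<Longrightarrow> s \<inter> s' = {}"
  using st_unique by blast

end

lemma succ_filter:
  assumes "successively (\<lambda>p q. \<beta> p = \<alpha> q) xs" "\<forall>x\<in>set xs. \<not> Q x \<longrightarrow> \<alpha> x = \<beta> x" "xs \<noteq> []"
  shows "successively (\<lambda>p q. \<beta> p = \<alpha> q) (filter Q xs) \<and>
    (filter Q xs \<noteq> [] \<longrightarrow> \<alpha> (hd (filter Q xs)) = \<alpha> (hd xs) \<and> \<beta> (last (filter Q xs)) = \<beta> (last xs)) \<and>
    (filter Q xs = [] \<longrightarrow> \<alpha> (hd xs) = \<beta> (last xs))"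
  using assms
proof (induction xs)
  case Nil then show ?case by simp
next
  case (Cons x xs)
  show ?case
  proof (cases "xs = []")
    case True then show ?thesis using Cons.prems by auto
  next
    case False
    have sx: "successively (\<lambda>p q. \<beta> p = \<alpha> q) xs" "\<beta> x = \<alpha> (hd xs)"
      using Cons.prems(1) False by (auto simp: successively_Cons)
    note IH = Cons.IH[OF sx(1) _ False]
    have IH': "successively (\<lambda>p q. \<beta> p = \<alpha> q) (filter Q xs) \<and>
    (filter Q xs \<noteq> [] \<longrightarrow> \<alpha> (hd (filter Q xs)) = \<alpha> (hd xs) \<and> \<beta> (last (filter Q xs)) = \<beta> (last xs)) \<and>
    (filter Q xs = [] \<longrightarrow> \<alpha> (hd xs) = \<beta> (last xs))" using IH Cons.prems(2) by simp
    show ?thesis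
    proof (cases "Q x")
      case True
      then show ?thesis using IH' sx False by (cases "filter Q xs") (auto simp: successively_Cons)
    next
      case False
      then have "\<alpha> x = \<beta> x" using Cons.prems(2) by simp
      then show ?thesis using IH' sx False \<open>xs \<noteq> []\<close> by auto
    qed
  qed
qed

lemma cyc_filter:
  assumes "\<forall>i<length xs. \<beta> (xs!i) = \<alpha> (xs!(Suc i mod length xs))" "\<forall>x\<in>set xs. \<not> Q x \<longrightarrow> \<alpha> x = \<beta> x"
  shows "\<forall>i<length (filter Q xs). \<beta> (filter Q xs!i) = \<alpha> (filter Q xs!(Suc i mod length (filter Q xs)))"
proof (cases "xs = []")
  case True then show ?thesis by simp
next
  case False
  have a: "successively (\<lambda>p q. \<beta> p = \<alpha> q) xs" "\<beta> (last xs) = \<alpha> (hd xs)"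
    using assms(1) False unfolding cyc_iff[where R="\<lambda>p q. \<beta> p = \<alpha> q"] by auto
  note sf = succ_filter[OF a(1) assms(2) False]
  show ?thesis unfolding cyc_iff[where R="\<lambda>p q. \<beta> p = \<alpha> q"] using sf a(2) by auto
qed

lemma pred_ex: "i < n \<Longrightarrow> \<exists>j<n. Suc j mod n = i"
proof (cases i)
  case 0
  assume "i < n"
  then show ?thesis using 0 by (intro exI[of _ "n - 1"]) auto
next
  case (Suc k)
  assume "i < n"
  then show ?thesis using Suc by (intro exI[of _ k]) auto
qed

context setting begin

lemma tch_simps: "gverts T = P" "ghalfs T = \<Union>(trans_of ` P)" "gedges T = tau F P"
  unfolding Tch_def by simp_all

lemma FE_simps: "gverts FE = gverts F" "ghalfs FE = H - \<Union>E" "gedges FE = gedges F - E" "ginc FE = ginc F"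
  unfolding del_edges_def by simp_all

lemma halves_at_card: "v \<in> gverts F \<Longrightarrow> card {h\<in>H. ginc F h = v} = 4"
  using reg unfolding four_regular_def by blast

lemma tau_props:
  assumes "t \<in> tau F P"
  obtains v s1 s2 C1 C2 where "t = {s1, s2}" "s1 \<noteq> s2" "s1 \<inter> s2 = {}" "s1 \<union> s2 = {h\<in>H. ginc F h = v}"
    "C1 \<in> P" "s1 \<in> trans_of C1" "C2 \<in> P" "s2 \<in> trans_of C2" "v \<in> gverts F"
proof -
  obtain v s1 s2 where v: "v \<in> gverts F" "t = {s1, s2}" "card s1 = 2" "card s2 = 2" "s1 \<inter> s2 = {}"
    "s1 \<union> s2 = {h\<in>H. ginc F h = v}" and sub: "t \<subseteq> \<Union>(trans_of ` P)"
    using assms unfolding tau_def transition_at_def by blast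
  have "s1 \<noteq> s2" using v(3,5) by auto
  moreover obtain C1 where "C1 \<in> P" "s1 \<in> trans_of C1" using sub v(2) by blast
  moreover obtain C2 where "C2 \<in> P" "s2 \<in> trans_of C2" using sub v(2) by blast
  ultimately show thesis using that v by blast
qed

lemma tau_uniq:
  assumes "t \<in> tau F P" "t' \<in> tau F P" "s \<in> t" "s \<in> t'"
  shows "t = t'"
proof -
  obtain v s1 s2 C1 C2 where a: "t = {s1, s2}" "s1 \<noteq> s2" "s1 \<inter> s2 = {}" "s1 \<union> s2 = {h\<in>H. ginc F h = v}"
    "C1 \<in> P" "s1 \<in> trans_of C1" "C2 \<in> P" "s2 \<in> trans_of C2" "v \<in> gverts F"
    by (rule tau_props[OF assms(1)])
  obtain v' s1' s2' C1' C2' where b: "t' = {s1', s2'}" "s1' \<noteq> s2'" "s1' \<inter> s2' = {}" "s1' \<union> s2' = {h\<in>H. ginc F h = v'}"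
    "C1' \<in> P" "s1' \<in> trans_of C1'" "C2' \<in> P" "s2' \<in> trans_of C2'" "v' \<in> gverts F"
    by (rule tau_props[OF assms(2)])
  have gen: "\<exists>r. t = {s, r} \<and> s \<inter> r = {} \<and> s \<union> r = {h\<in>H. ginc F h = v}"
  proof (cases "s = s1")
    case True then show ?thesis using a by (intro exI[of _ s2]) simp
  next
    case False then have "s = s2" using assms(3) a(1) by simp
    then show ?thesis using a by (intro exI[of _ s1]) (simp add: insert_commute Int_commute Un_commute)
  qed
  have gen': "\<exists>r. t' = {s, r} \<and> s \<inter> r = {} \<and> s \<union> r = {h\<in>H. ginc F h = v'}"
  proof (cases "s = s1'")
    case True then show ?thesis using b by (intro exI[of _ s2']) simp
  next
    case False then have "s = s2'" using assms(4) b(1) by simp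
    then show ?thesis using b by (intro exI[of _ s1']) (simp add: insert_commute Int_commute Un_commute)
  qed
  obtain r where r: "t = {s, r}" "s \<inter> r = {}" "s \<union> r = {h\<in>H. ginc F h = v}" using gen by blast
  obtain r' where r': "t' = {s, r'}" "s \<inter> r' = {}" "s \<union> r' = {h\<in>H. ginc F h = v'}" using gen' by blast
  have "\<exists>C\<in>P. s \<in> trans_of C" using assms(3) a(1) a(5) a(6) a(7) a(8) by blast
  then have "card s = 2" using trans_card by blast
  then obtain h where h: "h \<in> s" by (metis card.empty ex_in_conv zero_neq_numeral)
  then have "ginc F h = v" "ginc F h = v'" using r(3) r'(3) by blast+
  then have "v = v'" by simp
  have "r = {h\<in>H. ginc F h = v} - s" using r(2,3) by blast
  moreover have "r' = {h\<in>H. ginc F h = v'} - s" using r'(2,3) by blast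
  ultimately have "r = r'" using \<open>v = v'\<close> by simp
  then show ?thesis using r(1) r'(1) by simp
qed

lemma finite_P: "finite P"
proof -
  have inj: "inj_on trans_of P"
  proof (rule inj_onI)
    fix C C' assume a: "C \<in> P" "C' \<in> P" "trans_of C = trans_of C'"
    obtain w where w: "w \<noteq> []" "C = circ_class w" using circ_walk[OF a(1)] by metis
    then obtain p where "p \<in> set w" using hd_in_set by blast
    then have s: "(\<lambda>(a, b). {a, b}) p \<in> trans_of C" unfolding w(2) trans_of_circ_class by blast
    then have "card ((\<lambda>(a, b). {a, b}) p) = 2" using trans_card a(1) by blast
    then obtain h where "h \<in> (\<lambda>(a, b). {a, b}) p" by fastforce
    then show "C = C'" using st_unique[OF a(1) s _ a(2)] s a(3) by metis
  qed
  have "trans_of ` P \<subseteq> Pow (Pow H)" using trans_card by blast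
  then have "finite (trans_of ` P)" using wf_parts(2) by (meson finite_Pow_iff finite_subset)
  then show ?thesis using inj by (rule finite_imageD)
qed

lemma gwf_T: "gwf T"
  unfolding gwf_def tch_simps
proof (intro conjI allI impI ballI)
  show "finite P" by (rule finite_P)
  have "tau F P \<subseteq> Pow (Pow H)" unfolding tau_def transition_at_def by blast
  then show "finite (tau F P)" using wf_parts(2) by (meson finite_Pow_iff finite_subset)
next
  fix e assume "e \<in> tau F P"
  then obtain v s1 s2 C1 C2 where a: "e = {s1, s2}" "s1 \<noteq> s2" "s1 \<inter> s2 = {}" "s1 \<union> s2 = {h\<in>H. ginc F h = v}"
    "C1 \<in> P" "s1 \<in> trans_of C1" "C2 \<in> P" "s2 \<in> trans_of C2" "v \<in> gverts F" by (rule tau_props)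
  then show "card e = 2" "e \<subseteq> \<Union>(trans_of ` P)" by auto
next
  show "ginc T ` \<Union>(trans_of ` P) \<subseteq> P" using tch_ginc by auto
next
  fix h e e' assume "e \<in> tau F P" "e' \<in> tau F P" "h \<in> e" "h \<in> e'"
  then show "e = e'" by (rule tau_uniq)
qed

end

lemma suc_mod_lt: "i < n \<Longrightarrow> Suc i mod n < (n::nat)"
proof -
  assume "i < n" then have "0 < n" by simp
  then show ?thesis by (rule mod_less_divisor)
qed

lemma etrav_len [simp]: "length (etrav w) = length w"
  by (simp add: etrav_def)

lemma etrav_nth: "i < length w \<Longrightarrow> etrav w ! i = (snd (w!i), fst (w!(Suc i mod length w)))"
  by (simp add: etrav_def)

lemma cw_etrav_tw:
  assumes "closed_walk G w"
  shows "trav_closed_walk G (etrav w)"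
  unfolding trav_closed_walk_def
proof (intro conjI ballI allI impI)
  fix p assume "p \<in> set (etrav w)"
  then obtain i where i: "i < length w" "p = etrav w ! i" by (auto simp: in_set_conv_nth)
  then show "case p of (a, b) \<Rightarrow> {a, b} \<in> gedges G"
    using closed_walk_nth(5)[OF assms i(1)] by (simp add: etrav_nth)
next
  fix i assume i: "i < length (etrav w)"
  then have i': "Suc i mod length w < length w" by (simp add: suc_mod_lt)
  show "ginc G (snd (etrav w ! i)) = ginc G (fst (etrav w ! (Suc i mod length (etrav w))))"
    using i i' closed_walk_nth(4)[OF assms i'] by (simp add: etrav_nth)
qed

lemma cw_etrav_nb:
  assumes "closed_walk G w"
  shows "nb_walk G (etrav w)"
  unfolding nb_walk_def
proof (intro conjI allI impI cw_etrav_tw[OF assms])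
  fix i assume i: "i < length (etrav w)"
  then have i': "Suc i mod length w < length w" by (simp add: suc_mod_lt)
  show "snd (etrav w ! i) \<noteq> fst (etrav w ! (Suc i mod length (etrav w)))"
    using i i' closed_walk_nth(3)[OF assms i'] by (simp add: etrav_nth)
qed

context setting begin

lemma cw_FE:
  assumes "closed_walk FE W" "(a, b) \<in> set W"
  shows "a \<in> H" "b \<in> H" "a \<noteq> b" "ginc F a = ginc F b" "a \<in> ghalfs FE" "b \<in> ghalfs FE"
proof -
  have "a \<in> ghalfs FE \<and> b \<in> ghalfs FE \<and> a \<noteq> b \<and> ginc FE a = ginc FE b"
    using assms unfolding closed_walk_def by blast
  then show "a \<in> H" "b \<in> H" "a \<noteq> b" "ginc F a = ginc F b" "a \<in> ghalfs FE" "b \<in> ghalfs FE"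
    unfolding FE_simps by auto
qed

lemma st_in_iff:
  assumes "h \<in> H" "C \<in> P" "s \<in> trans_of C"
  shows "h \<in> s \<longleftrightarrow> st h = s"
proof
  assume "h \<in> s" then show "st h = s" using st_of_eq assms by blast
next
  assume "st h = s" then show "h \<in> s" using st_of_ex[OF assms(1)] by blast
qed

lemma trans_at:
  assumes "C \<in> P" "s \<in> trans_of C" "h \<in> s"
  shows "s \<subseteq> {h'\<in>H. ginc F h' = ginc F h}"
proof -
  obtain a b where "s = {a, b}" "a \<noteq> b" "a \<in> H" "b \<in> H" "ginc F a = ginc F b"
    using trans_props[OF assms(1,2)] by blast
  then show ?thesis using assms(3) by auto
qed

lemma st_cross:
  assumes "a \<in> H" "b \<in> H" "ginc F a = ginc F b" "st a \<noteq> st b"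
  shows "{st a, st b} \<in> tau F P"
proof -
  obtain Ca where Ca: "Ca \<in> P" "st a \<in> trans_of Ca" "a \<in> st a" using st_of_ex[OF assms(1)] by blast
  obtain Cb where Cb: "Cb \<in> P" "st b \<in> trans_of Cb" "b \<in> st b" using st_of_ex[OF assms(2)] by blast
  define v where "v = ginc F a"
  have vV: "v \<in> gverts F" using wf_parts(3) assms(1) unfolding v_def by blast
  have sa: "st a \<subseteq> {h\<in>H. ginc F h = v}" using trans_at[OF Ca] unfolding v_def .
  have sb: "st b \<subseteq> {h\<in>H. ginc F h = v}" using trans_at[OF Cb] assms(3) unfolding v_def by simp
  have disj: "st a \<inter> st b = {}" using trans_disj[OF Ca(1,2) Cb(1,2) assms(4)] .
  have ca: "card (st a) = 2" and cb: "card (st b) = 2" using trans_card Ca Cb by blast+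
  then have fin: "finite (st a)" "finite (st b)" by (auto intro: card_ge_0_finite)
  have "card (st a \<union> st b) = 4" using card_Un_disjoint[OF fin disj] ca cb by simp
  moreover have "card {h\<in>H. ginc F h = v} = 4" using halves_at_card[OF vV] .
  moreover have "finite {h\<in>H. ginc F h = v}" using wf_parts(2) by simp
  ultimately have un: "st a \<union> st b = {h\<in>H. ginc F h = v}" using sa sb
    by (metis Un_subset_iff card_subset_eq)
  have "transition_at F v {st a, st b}" unfolding transition_at_def
    using vV ca cb disj un by blast
  moreover have "{st a, st b} \<subseteq> \<Union>(trans_of ` P)" using Ca Cb by blast
  ultimately show ?thesis unfolding tau_def by blast
qed

lemma trans_of_nth:
  assumes "C = circ_class w" "i < length w"
  shows "{fst (w!i), snd (w!i)} \<in> trans_of C"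
proof -
  have "w!i \<in> set w" using assms(2) by simp
  then show ?thesis unfolding assms(1) trans_of_circ_class by (auto simp: image_iff split: prod.splits)
qed

lemma edge_same_circ:
  assumes xy: "{x, y} \<in> gedges F"
  shows "ginc T (st x) = ginc T (st y)"
proof -
  have xH: "x \<in> H" using edge_props[OF xy] by blast
  obtain C where C: "C \<in> P" "st x \<in> trans_of C" "x \<in> st x" using st_of_ex[OF xH] by blast
  obtain w where w: "closed_walk F w" "C = circ_class w" using circ_walk[OF C(1)] by metis
  obtain p where p: "p \<in> set w" "st x = {fst p, snd p}" using C(2) unfolding w(2) trans_of_circ_class by auto
  then obtain i where i: "i < length w" "p = w!i" by (auto simp: in_set_conv_nth)
  have gx: "ginc T (st x) = C" using tch_ginc C by blast
  have "x = fst (w!i) \<or> x = snd (w!i)" using C(3) p(2) i(2) by auto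
  then show ?thesis
  proof
    assume x: "x = snd (w!i)"
    define i' where "i' = Suc i mod length w"
    have i': "i' < length w" using i(1) unfolding i'_def by (rule suc_mod_lt)
    have "{x, fst (w!i')} \<in> gedges F" using closed_walk_nth(5)[OF w(1) i(1)] x unfolding i'_def by simp
    then have "fst (w!i') = y" using edge_other xy by blast
    then have "st y = {fst (w!i'), snd (w!i')}" using st_of_eq[OF C(1) trans_of_nth[OF w(2) i']] by simp
    then have "ginc T (st y) = C" using tch_ginc[OF C(1) trans_of_nth[OF w(2) i']] by simp
    then show ?thesis using gx by simp
  next
    assume x: "x = fst (w!i)"
    obtain j where j: "j < length w" "Suc j mod length w = i" using pred_ex[OF i(1)] by blast
    have "{snd (w!j), x} \<in> gedges F" using closed_walk_nth(5)[OF w(1) j(1)] x j(2) by simp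
    then have "{x, snd (w!j)} \<in> gedges F" by (simp add: insert_commute)
    then have "snd (w!j) = y" using edge_other xy by blast
    then have "st y = {fst (w!j), snd (w!j)}" using st_of_eq[OF C(1) trans_of_nth[OF w(2) j(1)]] by simp
    then have "ginc T (st y) = C" using tch_ginc[OF C(1) trans_of_nth[OF w(2) j(1)]] by simp
    then show ?thesis using gx by simp
  qed
qed

lemma proj_tw:
  assumes W: "closed_walk FE W"
  shows "trav_closed_walk T (proj P W)"
proof -
  define xs where "xs = map (\<lambda>(a, b). (st a, st b)) W"
  define Q where "Q = (\<lambda>(s::'h set, s'::'h set). s \<noteq> s')"
  have pw: "proj P W = filter Q xs" unfolding proj_def xs_def Q_def ..
  have part1: "{s, s'} \<in> gedges T" if "(s, s') \<in> set (proj P W)" for s s'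
  proof -
    have "(s, s') \<in> set xs" "s \<noteq> s'" using that unfolding pw Q_def by auto
    then obtain a b where ab: "(a, b) \<in> set W" "s = st a" "s' = st b" unfolding xs_def by auto
    show ?thesis unfolding tch_simps ab(2,3)
      by (rule st_cross) (use cw_FE[OF W ab(1)] \<open>s \<noteq> s'\<close> ab in auto)
  qed
  have cyc: "\<forall>i<length xs. ginc T (snd (xs!i)) = ginc T (fst (xs!(Suc i mod length xs)))"
  proof (intro allI impI)
    fix i assume i: "i < length xs"
    then have iW: "i < length W" "Suc i mod length W < length W" unfolding xs_def by (auto simp: suc_mod_lt)
    have "{snd (W!i), fst (W!(Suc i mod length W))} \<in> gedges FE" using closed_walk_nth(5)[OF W iW(1)] .
    then have "{snd (W!i), fst (W!(Suc i mod length W))} \<in> gedges F" unfolding FE_simps by simp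
    from edge_same_circ[OF this] show "ginc T (snd (xs!i)) = ginc T (fst (xs!(Suc i mod length xs)))"
      using iW unfolding xs_def by (simp add: case_prod_beta)
  qed
  have nq: "\<forall>x\<in>set xs. \<not> Q x \<longrightarrow> ginc T (fst x) = ginc T (snd x)" unfolding Q_def by auto
  have "\<forall>i<length (filter Q xs). ginc T (snd (filter Q xs!i)) = ginc T (fst (filter Q xs!(Suc i mod length (filter Q xs))))"
    by (rule cyc_filter[OF cyc nq])
  then show ?thesis unfolding trav_closed_walk_def using part1 unfolding pw by auto
qed

lemma proj_circ:
  assumes "C \<in> P" "W \<in> C"
  shows "proj P W = []"
proof -
  have "st a = st b" if "(a, b) \<in> set W" for a b
  proof -
    have s: "{a, b} \<in> trans_of C" unfolding trans_of_def using that assms(2) by blast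
    show ?thesis using st_of_eq[OF assms(1) s] by simp
  qed
  then show ?thesis unfolding proj_def by (auto simp: filter_empty_conv)
qed

end

definition iscale :: "int \<Rightarrow> ('e \<Rightarrow> int) \<Rightarrow> ('e \<Rightarrow> int)" where
  "iscale c f = (\<lambda>x. c * f x)"

interpretation fm: module "iscale :: int \<Rightarrow> ('e \<Rightarrow> int) \<Rightarrow> _"
  by unfold_locales (auto simp: iscale_def algebra_simps fun_eq_iff)

lemma int_span_eq: "int_span X = fm.span X"
  unfolding int_span_def fm.span_explicit
  by (auto simp: iscale_def sum_fun_apply fun_eq_iff)

lemma sum_list_filter_map: "sum_list (map g (filter Q xs)) = sum_list (map (\<lambda>x. if Q x then g x else 0) xs)"
  by (induction xs) auto

lemma sum_list_cong_set: "(\<And>x. x \<in> set xs \<Longrightarrow> f x = g x) \<Longrightarrow> sum_list (map f xs) = sum_list (map g xs)"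
  by (metis map_cong)

context setting begin

definition edge_of :: "'h \<Rightarrow> 'h set" where
  "edge_of h = (THE e. e \<in> gedges F \<and> h \<in> e)"

definition eps :: "('h set \<Rightarrow> 'h) \<Rightarrow> 'h \<Rightarrow> int" where
  "eps D' h = (if D' (edge_of h) = h then -1 else 1)"

definition Lint :: "('h set set \<Rightarrow> 'h set) \<Rightarrow> ('h set \<Rightarrow> 'h) \<Rightarrow> ('h set \<Rightarrow> int) \<Rightarrow> 'h set set \<Rightarrow> int" where
  "Lint D D' x t = (if t \<in> tau F P then \<Sum>h\<in>D t. eps D' h * x (edge_of h) else 0)"

definition Lq :: "('h set set \<Rightarrow> 'h set) \<Rightarrow> ('h set \<Rightarrow> 'h) \<Rightarrow> ('h set \<Rightarrow> rat) \<Rightarrow> 'h set set \<Rightarrow> rat" where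
  "Lq D D' x t = (if t \<in> tau F P then \<Sum>h\<in>D t. of_int (eps D' h) * x (edge_of h) else 0)"

lemma edge_of_eq: "e \<in> gedges F \<Longrightarrow> h \<in> e \<Longrightarrow> edge_of h = e"
  unfolding edge_of_def
proof (rule the_equality)
  assume "e \<in> gedges F" "h \<in> e" then show "e \<in> gedges F \<and> h \<in> e" by simp
next
  fix e' assume "e \<in> gedges F" "h \<in> e" "e' \<in> gedges F \<and> h \<in> e'"
  then show "e' = e" using edge_uniq by blast
qed

lemma edge_of_in: "h \<in> H \<Longrightarrow> edge_of h \<in> gedges F \<and> h \<in> edge_of h"
proof -
  assume "h \<in> H"
  with wf_parts(5) have "\<exists>!e. e \<in> gedges F \<and> h \<in> e" by (rule bspec)
  then obtain e where "e \<in> gedges F" "h \<in> e" by blast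
  then show ?thesis using edge_of_eq by simp
qed

lemma rat_vec_Lint: "rat_vec (Lint D D' y) = Lq D D' (rat_vec y)"
  unfolding rat_vec_def Lint_def Lq_def by (simp add: fun_eq_iff)

lemma Lq_hom: "module_hom fscale fscale (Lq D D')"
  unfolding module_hom_iff
proof (intro conjI allI)
  show "module (fscale :: rat \<Rightarrow> ('h set \<Rightarrow> rat) \<Rightarrow> _)"
    using fv.vector_space_axioms by (simp add: module_iff_vector_space)
  show "module (fscale :: rat \<Rightarrow> ('h set set \<Rightarrow> rat) \<Rightarrow> _)"
    using fv.vector_space_axioms by (simp add: module_iff_vector_space)
  fix x y :: "'h set \<Rightarrow> rat"
  show "Lq D D' (x + y) = Lq D D' x + Lq D D' y"
    unfolding Lq_def by (simp add: fun_eq_iff sum.distrib algebra_simps)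
next
  fix c x
  show "Lq D D' (fscale c x) = fscale c (Lq D D' x)"
    unfolding Lq_def fscale_def by (simp add: fun_eq_iff sum_distrib_left algebra_simps)
qed

lemma Lint_hom: "module_hom iscale iscale (Lint D D')"
  unfolding module_hom_iff
proof (intro conjI allI)
  show "module (iscale :: int \<Rightarrow> ('h set \<Rightarrow> int) \<Rightarrow> _)"
    using fm.module_axioms .
  show "module (iscale :: int \<Rightarrow> ('h set set \<Rightarrow> int) \<Rightarrow> _)"
    using fm.module_axioms .
  fix x y :: "'h set \<Rightarrow> int"
  show "Lint D D' (x + y) = Lint D D' x + Lint D D' y"
    unfolding Lint_def by (simp add: fun_eq_iff sum.distrib algebra_simps)
next
  fix c x
  show "Lint D D' (iscale c x) = iscale c (Lint D D' x)"
    unfolding Lint_def iscale_def by (simp add: fun_eq_iff sum_distrib_left algebra_simps)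
qed

lemma sig_proj:
  assumes W: "closed_walk FE W" and D: "orientation T D" and t: "t \<in> tau F P"
  shows "sigma_trav T D (proj P W) t =
    sum_list (map (\<lambda>(a, b). (if a \<in> D t then 1 else 0) - (if b \<in> D t then 1 else (0::int))) W)"
proof -
  define g where "g = (\<lambda>(s, s'). if {s, s'} = t then (if s = D t then 1 else -1) else (0::int))"
  define Q where "Q = (\<lambda>(s::'h set, s'::'h set). s \<noteq> s')"
  have "sigma_trav T D (proj P W) t = sum_list (map g (proj P W))"
    unfolding sigma_trav_def g_def using t by (simp add: tch_simps)
  also have "\<dots> = sum_list (map (\<lambda>x. if Q x then g x else 0) (map (\<lambda>(a, b). (st a, st b)) W))"
    unfolding proj_def Q_def[symmetric] by (rule sum_list_filter_map)
  also have "\<dots> = sum_list (map (\<lambda>(a, b). (if a \<in> D t then 1 else 0) - (if b \<in> D t then 1 else (0::int))) W)"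
    unfolding map_map
  proof (rule sum_list_cong_set)
    fix p assume p: "p \<in> set W"
    obtain a b where ab: "p = (a, b)" by fastforce
    note cw = cw_FE[OF W p[unfolded ab]]
    have Dt: "D t \<in> t" using D t unfolding orientation_def tch_simps by blast
    obtain v s1 s2 C1 C2 where tp: "t = {s1, s2}" "s1 \<noteq> s2" "s1 \<inter> s2 = {}" "s1 \<union> s2 = {h\<in>H. ginc F h = v}"
      "C1 \<in> P" "s1 \<in> trans_of C1" "C2 \<in> P" "s2 \<in> trans_of C2" "v \<in> gverts F"
      by (rule tau_props[OF t])
    have "D t = s1 \<or> D t = s2" using Dt tp(1) by simp
    then obtain Cd where Cd: "Cd \<in> P" "D t \<in> trans_of Cd" using tp(5) tp(6) tp(7) tp(8) by blast
    have ia: "a \<in> D t \<longleftrightarrow> st a = D t" by (rule st_in_iff[OF cw(1) Cd])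
    have ib: "b \<in> D t \<longleftrightarrow> st b = D t" by (rule st_in_iff[OF cw(2) Cd])
    have rhs: "(\<lambda>(a, b). (if a \<in> D t then 1 else 0) - (if b \<in> D t then 1 else (0::int))) p =
      (if st a = D t then 1 else 0) - (if st b = D t then 1 else 0)"
      unfolding ab by (simp only: ia ib prod.case)
    show "((\<lambda>x. if Q x then g x else 0) \<circ> (\<lambda>(a, b). (st a, st b))) p =
      (\<lambda>(a, b). (if a \<in> D t then 1 else 0) - (if b \<in> D t then 1 else (0::int))) p"
    proof (cases "st a = st b")
      case True
      have "((\<lambda>x. if Q x then g x else 0) \<circ> (\<lambda>(a, b). (st a, st b))) p = 0"
        unfolding ab Q_def using True by simp
      then show ?thesis using True rhs by simp
    next
      case False
      have t': "{st a, st b} \<in> tau F P" by (rule st_cross[OF cw(1,2,4) False])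
      have lhs: "((\<lambda>x. if Q x then g x else 0) \<circ> (\<lambda>(a, b). (st a, st b))) p =
          (if {st a, st b} = t then (if st a = D t then 1 else -1) else 0)"
        unfolding ab Q_def g_def using False by simp
      show ?thesis
      proof (cases "{st a, st b} = t")
        case True
        then have "D t \<in> {st a, st b}" using Dt by simp
        then have "st a = D t \<or> st b = D t" by blast
        then show ?thesis
        proof
          assume "st a = D t"
          moreover then have "st b \<noteq> D t" using False by simp
          ultimately show ?thesis unfolding lhs rhs using True by simp
        next
          assume "st b = D t"
          moreover then have "st a \<noteq> D t" using False by simp
          ultimately show ?thesis unfolding lhs rhs using True by simp
        qed
      next
        case tn: False
        have "st a \<noteq> D t"
        proof
          assume "st a = D t"
          then have "st a \<in> t" using Dt by simp
          then have "{st a, st b} = t" using tau_uniq[OF t' t, of "st a"] by simp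
          then show False using tn by simp
        qed
        moreover have "st b \<noteq> D t"
        proof
          assume "st b = D t"
          then have "st b \<in> t" using Dt by simp
          then have "{st a, st b} = t" using tau_uniq[OF t' t, of "st b"] by simp
          then show False using tn by simp
        qed
        ultimately show ?thesis unfolding lhs rhs using tn by simp
      qed
    qed
  qed
  finally show ?thesis .
qed

lemma cnt_point:
  assumes pq: "{p, q} \<in> gedges F" and e: "{h, h'} \<in> gedges F" "h \<noteq> h'" and De: "d \<in> {h, h'}"
  shows "(if d = h then -1 else 1) * (if {p, q} = {h, h'} then (if p = d then 1 else -1) else (0::int)) =
    (if q = h then 1 else 0) - (if p = h then 1 else 0)"
proof (cases "{p, q} = {h, h'}")
  case True
  have "card {p, q} = 2" using edge_props[OF pq] by simp
  then have pnq: "p \<noteq> q" by auto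
  have c1: "(p = h \<and> q = h') \<or> (p = h' \<and> q = h)" using True pnq by (simp add: doubleton_eq_iff)
  have c2: "d = h \<or> d = h'" using De by simp
  show ?thesis
  proof (rule disjE[OF c1]; rule disjE[OF c2])
    assume "p = h \<and> q = h'" "d = h" then show ?thesis using e(2) True by simp
  next
    assume "p = h \<and> q = h'" "d = h'" then show ?thesis using e(2) True by simp
  next
    assume "p = h' \<and> q = h" "d = h" then show ?thesis using e(2) True by simp
  next
    assume "p = h' \<and> q = h" "d = h'" then show ?thesis using e(2) True by simp
  qed
next
  case False
  have "p \<noteq> h"
  proof
    assume "p = h" then have "{p, q} = {h, h'}" using edge_uniq[OF pq e(1), of h] by simp
    then show False using False by simp
  qed
  moreover have "q \<noteq> h"
  proof
    assume "q = h" then have "{p, q} = {h, h'}" using edge_uniq[OF pq e(1), of h] by simp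
    then show False using False by simp
  qed
  ultimately show ?thesis using False by simp
qed

lemma cnt_h:
  assumes W: "closed_walk FE W" and D': "orientation FE D'" and h: "h \<in> H"
  shows "(\<Sum>i<length W. (if fst (W!i) = h then 1 else 0) - (if snd (W!i) = h then 1 else (0::int)))
     = eps D' h * sigma FE D' W (edge_of h)"
proof -
  define n where "n = length W"
  define e where "e = edge_of h"
  have e: "e \<in> gedges F" "h \<in> e" using edge_of_in[OF h] unfolding e_def by auto
  show ?thesis
  proof (cases "e \<in> E")
    case True
    then have hn: "h \<notin> ghalfs FE" using e unfolding FE_simps by blast
    have "(if fst (W!i) = h then 1 else 0) - (if snd (W!i) = h then 1 else (0::int)) = 0" if "i < length W" for i
      using closed_walk_nth(1,2)[OF W that] hn by auto
    then have "(\<Sum>i<length W. (if fst (W!i) = h then 1 else 0) - (if snd (W!i) = h then 1 else (0::int))) = 0"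
      by simp
    moreover have "sigma FE D' W e = 0" unfolding sigma_def sigma_trav_def FE_simps using True by simp
    ultimately show ?thesis unfolding e_def by simp
  next
    case False
    then have eFE: "e \<in> gedges FE" using e unfolding FE_simps by simp
    have "card e = 2" using edge_props[OF e(1)] by simp
    then obtain x y where xy: "e = {x, y}" "x \<noteq> y" by (meson card_2_iff)
    have "\<exists>h'. e = {h, h'} \<and> h \<noteq> h'"
    proof (cases "h = x")
      case True then show ?thesis using xy by blast
    next
      case False then have "h = y" using e(2) xy(1) by simp
      then show ?thesis using xy by (intro exI[of _ x]) (simp add: insert_commute)
    qed
    then obtain h' where h': "e = {h, h'}" "h \<noteq> h'" by blast
    have De: "D' e \<in> e" using D' eFE unfolding orientation_def by blast
    define f where "f = (\<lambda>(a, b). if {a, b} = e then (if a = D' e then 1 else -1) else (0::int))"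
    have "sigma FE D' W e = sum_list (map f (etrav W))"
      unfolding sigma_def sigma_trav_def f_def using eFE by simp
    also have "\<dots> = (\<Sum>i<n. f (etrav W ! i))"
      by (simp add: sum_list_sum_nth atLeast0LessThan n_def)
    also have "\<dots> = (\<Sum>i<n. f (snd (W!i), fst (W!(Suc i mod n))))"
      by (rule sum.cong) (simp_all add: etrav_nth n_def)
    finally have sig: "sigma FE D' W e = (\<Sum>i<n. f (snd (W!i), fst (W!(Suc i mod n))))" .
    have epsh: "eps D' h = (if D' e = h then -1 else 1)" unfolding eps_def e_def ..
    have "(\<Sum>i<n. (if fst (W!i) = h then 1 else 0) - (if snd (W!i) = h then 1 else (0::int)))
        = (\<Sum>i<n. (if fst (W!i) = h then 1 else (0::int))) - (\<Sum>i<n. (if snd (W!i) = h then 1 else 0))"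
      by (simp add: sum_subtractf)
    also have "(\<Sum>i<n. (if fst (W!i) = h then 1 else (0::int))) = (\<Sum>i<n. (if fst (W!(Suc i mod n)) = h then 1 else 0))"
      using sum_rot[of "\<lambda>i. (if fst (W!i) = h then 1 else (0::int))" n] by simp
    also have "(\<Sum>i<n. (if fst (W!(Suc i mod n)) = h then 1 else (0::int))) - (\<Sum>i<n. (if snd (W!i) = h then 1 else 0))
        = (\<Sum>i<n. (if fst (W!(Suc i mod n)) = h then 1 else (0::int)) - (if snd (W!i) = h then 1 else 0))"
      by (simp add: sum_subtractf)
    also have "\<dots> = (\<Sum>i<n. eps D' h * f (snd (W!i), fst (W!(Suc i mod n))))"
    proof (rule sum.cong[OF refl])
      fix i assume "i \<in> {..<n}"
      then have i: "i < length W" unfolding n_def by simp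
      have pq': "{snd (W!i), fst (W!(Suc i mod n))} \<in> gedges F"
        using closed_walk_nth(5)[OF W i] unfolding FE_simps n_def by simp
      have he: "{h, h'} \<in> gedges F" using e(1) h'(1) by simp
      have dh: "D' e \<in> {h, h'}" using De h'(1) by simp
      have cp: "(if D' e = h then -1 else 1) * (if {snd (W!i), fst (W!(Suc i mod n))} = {h, h'} then (if snd (W!i) = D' e then 1 else -1) else (0::int)) =
        (if fst (W!(Suc i mod n)) = h then 1 else 0) - (if snd (W!i) = h then 1 else 0)"
        by (rule cnt_point[OF pq' he h'(2) dh])
      from cp
      show "(if fst (W!(Suc i mod n)) = h then 1 else (0::int)) - (if snd (W!i) = h then 1 else 0)
          = eps D' h * f (snd (W!i), fst (W!(Suc i mod n)))"
        unfolding epsh f_def h'(1) by simp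
    qed
    also have "\<dots> = eps D' h * sigma FE D' W e" unfolding sig by (simp add: sum_distrib_left)
    finally show ?thesis unfolding n_def e_def .
  qed
qed

lemma cnt:
  assumes W: "closed_walk FE W" and D': "orientation FE D'" and S: "S \<subseteq> H" "finite S"
  shows "sum_list (map (\<lambda>(a, b). (if a \<in> S then 1 else 0) - (if b \<in> S then 1 else (0::int))) W)
    = (\<Sum>h\<in>S. eps D' h * sigma FE D' W (edge_of h))"
proof -
  define n where "n = length W"
  have "sum_list (map (\<lambda>(a, b). (if a \<in> S then 1 else 0) - (if b \<in> S then 1 else (0::int))) W)
      = (\<Sum>i<n. (if fst (W!i) \<in> S then 1 else 0) - (if snd (W!i) \<in> S then 1 else (0::int)))"
    by (simp add: sum_list_sum_nth atLeast0LessThan n_def case_prod_beta)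
  also have "\<dots> = (\<Sum>i<n. \<Sum>h\<in>S. (if fst (W!i) = h then 1 else 0) - (if snd (W!i) = h then 1 else (0::int)))"
    by (rule sum.cong[OF refl]) (simp add: sum_subtractf sum.delta' S(2))
  also have "\<dots> = (\<Sum>h\<in>S. \<Sum>i<n. (if fst (W!i) = h then 1 else 0) - (if snd (W!i) = h then 1 else (0::int)))"
    by (rule sum.swap)
  also have "\<dots> = (\<Sum>h\<in>S. eps D' h * sigma FE D' W (edge_of h))"
    by (rule sum.cong[OF refl]) (use cnt_h[OF W D'] S(1) in \<open>auto simp: n_def\<close>)
  finally show ?thesis .
qed

lemma sig_L:
  assumes W: "closed_walk FE W" and D: "orientation T D" and D': "orientation FE D'"
  shows "sigma_trav T D (proj P W) = Lint D D' (sigma FE D' W)"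
proof
  fix t
  show "sigma_trav T D (proj P W) t = Lint D D' (sigma FE D' W) t"
  proof (cases "t \<in> tau F P")
    case False
    then show ?thesis unfolding sigma_trav_def Lint_def tch_simps by simp
  next
    case True
    have Dt: "D t \<in> t" using D True unfolding orientation_def tch_simps by blast
    obtain v s1 s2 C1 C2 where tp: "t = {s1, s2}" "s1 \<noteq> s2" "s1 \<inter> s2 = {}" "s1 \<union> s2 = {h\<in>H. ginc F h = v}"
      "C1 \<in> P" "s1 \<in> trans_of C1" "C2 \<in> P" "s2 \<in> trans_of C2" "v \<in> gverts F"
      by (rule tau_props[OF True])
    have "D t = s1 \<or> D t = s2" using Dt tp(1) by simp
    then obtain Cd where Cd: "Cd \<in> P" "D t \<in> trans_of Cd" using tp(5) tp(6) tp(7) tp(8) by blast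
    have ct: "card (D t) = 2 \<and> D t \<subseteq> H" by (rule trans_card[OF Cd])
    then have fin: "finite (D t)" by (metis card.infinite zero_neq_numeral)
    show ?thesis unfolding sig_proj[OF W D True] cnt[OF W D' conjunct2[OF ct] fin] Lint_def using True by simp
  qed
qed

end

lemma nth_rotate': "i < length xs \<Longrightarrow> rotate k xs ! i = xs ! ((k + i) mod length xs)"
  by (simp add: nth_rotate add.commute)

lemma rotate_closed_walk:
  assumes w: "closed_walk G w"
  shows "closed_walk G (rotate k w)"
  unfolding closed_walk_def
proof (intro conjI allI impI)
  show "\<forall>(a, b)\<in>set (rotate k w). a \<in> ghalfs G \<and> b \<in> ghalfs G \<and> a \<noteq> b \<and> ginc G a = ginc G b"
    using w unfolding closed_walk_def by simp
next
  fix i assume i: "i < length (rotate k w)"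
  define n where "n = length w"
  have i': "i < n" using i unfolding n_def by simp
  define j where "j = (k + i) mod n"
  have j: "j < n" using i' unfolding j_def by simp
  have "(k + Suc i mod n) mod n = Suc j mod n" unfolding j_def by (simp add: mod_add_right_eq mod_Suc_eq)
  moreover have "Suc i mod n < n" using i' by (rule suc_mod_lt)
  ultimately have "rotate k w ! (Suc i mod n) = w ! (Suc j mod n)" using nth_rotate'[of "Suc i mod n" w k] n_def by simp
  moreover have "rotate k w ! i = w ! j" using nth_rotate'[of i w k] i' unfolding j_def n_def by simp
  ultimately show "{snd (rotate k w ! i), fst (rotate k w ! (Suc i mod length (rotate k w)))} \<in> gedges G"
    using closed_walk_nth(5)[OF w j[unfolded n_def]] unfolding n_def by simp
qed

lemma rotate_distinct_halfs:
  "distinct (walk_halfs w) \<Longrightarrow> distinct (walk_halfs (rotate k w))"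
  unfolding distinct_walk_halfs by (simp add: rotate_map[symmetric])

context setting begin

definition ed :: "('h \<times> 'h) list \<Rightarrow> nat \<Rightarrow> 'h set" where
  "ed w i = {snd (w!i), fst (w!(Suc i mod length w))}"

lemma finite_edges: "finite (gedges F)"
proof -
  have "gedges F \<subseteq> Pow H" using edge_props by blast
  then show ?thesis using wf_parts(2) by (meson finite_Pow_iff finite_subset)
qed

lemma good_walk:
  assumes C: "C \<in> P"
  shows "\<exists>w. closed_walk F w \<and> w \<noteq> [] \<and> distinct (walk_halfs w) \<and> trans_of C = (\<lambda>(a, b). {a, b}) ` set w
    \<and> (\<forall>i. Suc i < length w \<longrightarrow> {snd (w!i), fst (w!Suc i)} \<notin> E)"
proof -
  obtain w0 where w0: "closed_walk F w0" "w0 \<noteq> []" "distinct (walk_halfs w0)" "C = circ_class w0"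
    using circ_walk[OF C] by metis
  define n where "n = length w0"
  have n0: "n > 0" using w0(2) unfolding n_def by simp
  have dw: "distinct (map fst w0)" "distinct (map snd w0)" "fst ` set w0 \<inter> snd ` set w0 = {}"
    using w0(3) unfolding distinct_walk_halfs by blast+
  have trav: "ed w0 i \<in> traversed C" if "i < n" for i
  proof -
    have "(snd (w0!i), fst (w0!(Suc i mod n))) \<in> set (etrav w0)"
      using that etrav_nth[of i w0] unfolding n_def by (metis etrav_len nth_mem)
    then show ?thesis unfolding traversed_def ed_def n_def using in_circ_class[of w0] w0(4) by blast
  qed
  have ed_inj: "ed w0 i \<noteq> ed w0 j" if "i < n" "j < n" "i \<noteq> j" for i j
  proof
    assume eq: "ed w0 i = ed w0 j"
    have "snd (w0!i) \<in> ed w0 j" using eq unfolding ed_def by auto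
    then have "snd (w0!i) = snd (w0!j) \<or> snd (w0!i) = fst (w0!(Suc j mod n))" unfolding ed_def n_def by auto
    then show False
    proof
      assume "snd (w0!i) = snd (w0!j)"
      then have "(map snd w0)!i = (map snd w0)!j" using that unfolding n_def by simp
      then show False using nth_eq_iff_index_eq[OF dw(2), of i j] that unfolding n_def by simp
    next
      assume a: "snd (w0!i) = fst (w0!(Suc j mod n))"
      have "Suc j mod n < n" using that(2) by (rule suc_mod_lt)
      then have "fst (w0!(Suc j mod n)) \<in> fst ` set w0" unfolding n_def by (intro imageI nth_mem)
      moreover have "snd (w0!i) \<in> snd ` set w0" using that(1) unfolding n_def by (intro imageI nth_mem)
      ultimately show False using dw(3) a by (metis IntI empty_iff)
    qed
  qed
  show ?thesis
  proof (cases "\<exists>j<n. ed w0 j \<in> E")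
    case False
    have "{snd (w0!i), fst (w0!Suc i)} \<notin> E" if "Suc i < length w0" for i
    proof -
      have "Suc i mod n = Suc i" using that unfolding n_def by simp
      then have "ed w0 i = {snd (w0!i), fst (w0!Suc i)}" unfolding ed_def n_def by simp
      moreover have "i < n" using that unfolding n_def by simp
      ultimately show ?thesis using False by auto
    qed
    moreover have "trans_of C = (\<lambda>(a, b). {a, b}) ` set w0" unfolding w0(4) by (rule trans_of_circ_class)
    ultimately show ?thesis using w0(1) w0(2) w0(3) by blast
  next
    case True
    then obtain j where j: "j < n" "ed w0 j \<in> E" by blast
    have only: "ed w0 i \<notin> E" if "i < n" "i \<noteq> j" for i
    proof
      assume "ed w0 i \<in> E"
      then have sub: "{ed w0 i, ed w0 j} \<subseteq> traversed C \<inter> E" using trav that j by blast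
      have "finite (traversed C \<inter> E)" using EF finite_edges by (meson finite_Int finite_subset)
      then have "card {ed w0 i, ed w0 j} \<le> card (traversed C \<inter> E)" using sub by (rule card_mono)
      moreover have "card {ed w0 i, ed w0 j} = 2" using ed_inj[OF that(1) j(1) that(2)] by simp
      moreover have "card (traversed C \<inter> E) \<le> 1" using E1 C by blast
      ultimately show False by simp
    qed
    define w where "w = rotate (Suc j) w0"
    have lw: "length w = n" unfolding w_def n_def by simp
    have cw: "closed_walk F w" unfolding w_def by (rule rotate_closed_walk[OF w0(1)])
    have "w \<noteq> []" using lw n0 by auto
    moreover have "distinct (walk_halfs w)" unfolding w_def by (rule rotate_distinct_halfs[OF w0(3)])
    moreover have "trans_of C = (\<lambda>(a, b). {a, b}) ` set w" unfolding w_def w0(4) trans_of_circ_class by simp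
    moreover have "{snd (w!i), fst (w!Suc i)} \<notin> E" if "Suc i < length w" for i
    proof -
      define m where "m = (Suc j + i) mod n"
      have m: "m < n" unfolding m_def using n0 by simp
      have "w!i = w0!m" unfolding w_def m_def using nth_rotate'[of i w0 "Suc j"] that lw n_def by simp
      moreover have "w!(Suc i) = w0!(Suc m mod n)" unfolding w_def m_def
        using nth_rotate'[of "Suc i" w0 "Suc j"] that lw n_def by (simp add: mod_Suc_eq)
      ultimately have "{snd (w!i), fst (w!Suc i)} = ed w0 m" unfolding ed_def n_def by simp
      moreover have "m \<noteq> j"
      proof
        assume mj: "m = j"
        have si: "Suc i < n" using that lw by simp
        show False
        proof (cases "Suc j + i < n")
          case True
          then have "m = Suc j + i" unfolding m_def by simp
          then show False using mj by simp
        next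
          case False
          then have "m = (Suc j + i - n) mod n" unfolding m_def by (simp add: le_mod_geq)
          also have "Suc j + i - n < n" using j(1) si by simp
          then have "(Suc j + i - n) mod n = Suc j + i - n" by simp
          finally have "m = Suc j + i - n" .
          then show False using mj si False by simp
        qed
      qed
      ultimately show ?thesis using only[OF m] by simp
    qed
    ultimately show ?thesis using cw by (intro exI[of _ w]) simp
  qed
qed

end

definition linkR :: "('v, 'h) graph \<Rightarrow> ('h \<times> 'h) \<Rightarrow> ('h \<times> 'h) \<Rightarrow> bool" where
  "linkR G p q \<longleftrightarrow> {snd p, fst q} \<in> gedges G"

lemma succ_upt:
  assumes "\<And>i. m \<le> i \<Longrightarrow> Suc i < n \<Longrightarrow> R (g i) (g (Suc i))"
  shows "successively R (map g [m..<n])"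
  unfolding successively_conv_nth
proof (intro allI impI)
  fix i assume "Suc i < length (map g [m..<n])"
  then have i: "Suc i < n - m" by simp
  then have "map g [m..<n] ! i = g (m + i)" "map g [m..<n] ! Suc i = g (Suc (m + i))" by simp_all
  then show "R (map g [m..<n] ! i) (map g [m..<n] ! Suc i)" using assms[of "m + i"] i by simp
qed

lemma upt_split3: "j < k \<Longrightarrow> [j..<Suc k] = j # [Suc j..<k] @ [k]"
  by (simp add: upt_conv_Cons)

context setting begin

lemma half_FE: "e \<in> gedges FE \<Longrightarrow> h \<in> e \<Longrightarrow> h \<in> ghalfs FE"
proof -
  assume a: "e \<in> gedges FE" "h \<in> e"
  then have eF: "e \<in> gedges F" "e \<notin> E" unfolding FE_simps by auto
  have hH: "h \<in> H" using edge_props[OF eF(1)] a(2) by blast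
  have "h \<notin> \<Union>E"
  proof
    assume "h \<in> \<Union>E"
    then obtain e' where "e' \<in> E" "h \<in> e'" by blast
    then have "e' = e" using edge_uniq[OF _ eF(1), of e' h] EF a(2) by blast
    then show False using \<open>e' \<in> E\<close> eF(2) by simp
  qed
  then show ?thesis using hH unfolding FE_simps by simp
qed

lemma arc:
  assumes C: "C \<in> P" and w: "closed_walk F w" "distinct (walk_halfs w)"
    and tw: "trans_of C = (\<lambda>(a, b). {a, b}) ` set w"
    and noE: "\<forall>i. Suc i < length w \<longrightarrow> {snd (w!i), fst (w!Suc i)} \<notin> E"
    and s: "s \<in> trans_of C" "s' \<in> trans_of C" "s \<noteq> s'"
  shows "\<exists>y arc x. y \<in> s \<and> x \<in> s' \<and> successively (linkR FE) ((y, y) # arc @ [(x, x)])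
     \<and> (\<forall>p\<in>set arc. fst p \<noteq> snd p \<and> ginc F (fst p) = ginc F (snd p) \<and> st (fst p) = st (snd p))"
proof -
  define n where "n = length w"
  have EDGE: "{snd (w!i), fst (w!Suc i)} \<in> gedges FE" if "Suc i < n" for i
  proof -
    have "Suc i mod n = Suc i" using that by simp
    then have "{snd (w!i), fst (w!Suc i)} \<in> gedges F" using closed_walk_nth(5)[OF w(1), of i] that unfolding n_def by simp
    then show ?thesis using noE that unfolding FE_simps n_def by simp
  qed
  have elem: "fst (w!i) \<noteq> snd (w!i) \<and> ginc F (fst (w!i)) = ginc F (snd (w!i)) \<and> st (fst (w!i)) = st (snd (w!i))"
    if "i < n" for i
  proof -
    have tr: "{fst (w!i), snd (w!i)} \<in> trans_of C" unfolding tw using that unfolding n_def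
      by (metis (mono_tags, lifting) case_prod_beta image_eqI nth_mem)
    have "st (fst (w!i)) = {fst (w!i), snd (w!i)}" by (rule st_of_eq[OF C tr]) simp
    moreover have "st (snd (w!i)) = {fst (w!i), snd (w!i)}" by (rule st_of_eq[OF C tr]) simp
    ultimately show ?thesis using closed_walk_nth(3,4)[OF w(1), of i] that unfolding n_def by simp
  qed
  obtain j where j: "j < n" "s = {fst (w!j), snd (w!j)}"
    using s(1) unfolding tw n_def by (auto simp: in_set_conv_nth)
  obtain k where k: "k < n" "s' = {fst (w!k), snd (w!k)}"
    using s(2) unfolding tw n_def by (auto simp: in_set_conv_nth)
  have jk: "j \<noteq> k" using j k s(3) by auto
  show ?thesis
  proof (cases "j < k")
    case True
    define g where "g i = (if i = j then (snd (w!j), snd (w!j)) else if i = k then (fst (w!k), fst (w!k)) else w!i)" for i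
    define arc where "arc = map (nth w) [Suc j..<k]"
    have "map g [j..<Suc k] = (snd (w!j), snd (w!j)) # arc @ [(fst (w!k), fst (w!k))]"
    proof -
      have "map g [Suc j..<k] = arc" unfolding arc_def g_def by (rule map_cong) auto
      then show ?thesis unfolding upt_split3[OF True] using True by (simp add: g_def)
    qed
    moreover have "successively (linkR FE) (map g [j..<Suc k])"
    proof (rule succ_upt)
      fix i assume i: "j \<le> i" "Suc i < Suc k"
      have "snd (g i) = snd (w!i)" using i unfolding g_def by auto
      moreover have "fst (g (Suc i)) = fst (w!Suc i)" using i unfolding g_def by auto
      ultimately show "linkR FE (g i) (g (Suc i))" unfolding linkR_def using EDGE[of i] i k(1) by simp
    qed
    moreover have "\<forall>p\<in>set arc. fst p \<noteq> snd p \<and> ginc F (fst p) = ginc F (snd p) \<and> st (fst p) = st (snd p)"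
      unfolding arc_def using elem k(1) by auto
    ultimately show ?thesis using j(2) k(2)
      by (intro exI[of _ "snd (w!j)"] exI[of _ arc] exI[of _ "fst (w!k)"]) auto
  next
    case False
    then have kj: "k < j" using jk by simp
    define g where "g i = (if i = j then (fst (w!j), fst (w!j)) else if i = k then (snd (w!k), snd (w!k)) else (snd (w!i), fst (w!i)))" for i
    define arc where "arc = map (\<lambda>i. (snd (w!i), fst (w!i))) (rev [Suc k..<j])"
    have "rev (map g [k..<Suc j]) = (fst (w!j), fst (w!j)) # arc @ [(snd (w!k), snd (w!k))]"
    proof -
      have "map g [Suc k..<j] = map (\<lambda>i. (snd (w!i), fst (w!i))) [Suc k..<j]" unfolding g_def by (rule map_cong) auto
      then show ?thesis unfolding upt_split3[OF kj] arc_def using kj by (simp add: g_def rev_map)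
    qed
    moreover have "successively (linkR FE) (rev (map g [k..<Suc j]))"
      unfolding successively_rev
    proof (rule succ_upt)
      fix i assume i: "k \<le> i" "Suc i < Suc j"
      have "fst (g i) = snd (w!i)" using i unfolding g_def by auto
      moreover have "snd (g (Suc i)) = fst (w!Suc i)" using i unfolding g_def by auto
      ultimately show "linkR FE (g (Suc i)) (g i)" unfolding linkR_def using EDGE[of i] i j(1)
        by (simp add: insert_commute)
    qed
    moreover have "\<forall>p\<in>set arc. fst p \<noteq> snd p \<and> ginc F (fst p) = ginc F (snd p) \<and> st (fst p) = st (snd p)"
    proof
      fix p assume "p \<in> set arc"
      then obtain i where i: "i < j" "p = (snd (w!i), fst (w!i))" unfolding arc_def by auto
      then have "i < n" using j(1) by simp
      from elem[OF this] show "fst p \<noteq> snd p \<and> ginc F (fst p) = ginc F (snd p) \<and> st (fst p) = st (snd p)"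
        using i(2) by auto
    qed
    ultimately show ?thesis using j(2) k(2)
      by (intro exI[of _ "fst (w!j)"] exI[of _ arc] exI[of _ "snd (w!k)"]) auto
  qed
qed

end

lemma concat_succ:
  assumes "\<forall>i<n. seg i \<noteq> [] \<and> successively R (seg i)"
    "\<forall>i. Suc i < n \<longrightarrow> R (last (seg i)) (hd (seg (Suc i)))"
  shows "successively R (concat (map seg [0..<n])) \<and>
    (n > 0 \<longrightarrow> concat (map seg [0..<n]) \<noteq> [] \<and> hd (concat (map seg [0..<n])) = hd (seg 0)
       \<and> last (concat (map seg [0..<n])) = last (seg (n - 1)))"
  using assms
proof (induction n)
  case 0 then show ?case by simp
next
  case (Suc n)
  have IH: "successively R (concat (map seg [0..<n])) \<and>
    (n > 0 \<longrightarrow> concat (map seg [0..<n]) \<noteq> [] \<and> hd (concat (map seg [0..<n])) = hd (seg 0)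
       \<and> last (concat (map seg [0..<n])) = last (seg (n - 1)))"
    using Suc.IH Suc.prems by simp
  have sn: "seg n \<noteq> []" "successively R (seg n)" using Suc.prems(1) by auto
  show ?case
  proof (cases "n = 0")
    case True then show ?thesis using sn by simp
  next
    case False
    have lk: "R (last (seg (n - 1))) (hd (seg n))" using Suc.prems(2) False
      by (metis Suc_diff_1 lessI not_gr_zero)
    have eq: "concat (map seg [0..<Suc n]) = concat (map seg [0..<n]) @ seg n" by simp
    show ?thesis unfolding eq using IH sn lk False by (auto simp: successively_append_iff)
  qed
qed

lemma proj_append: "proj P (xs @ ys) = proj P xs @ proj P ys"
  unfolding proj_def by simp

lemma proj_concat: "proj P (concat xss) = concat (map (proj P) xss)"
  by (induction xss) (auto simp: proj_append proj_def)

lemma concat_singletons: "concat (map (\<lambda>i. [f i]) xs) = map f xs"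
  by (induction xs) auto

lemma pathR_seg:
  assumes "successively (linkR G) ((y, y) # arc @ [(x, x)])"
  shows "successively (linkR G) ((x', y) # arc) \<and> linkR G (last ((x', y) # arc)) (x, y'')"
proof (cases arc)
  case Nil then show ?thesis using assms by (simp add: linkR_def)
next
  case (Cons a as)
  have "successively (linkR G) (((y, y) # arc) @ [(x, x)])" using assms by simp
  then have a1: "successively (linkR G) ((y, y) # a # as)" "linkR G (last ((y, y) # a # as)) (x, x)"
    unfolding successively_append_iff Cons by auto
  have "linkR G (y, y) a" "successively (linkR G) (a # as)" using a1(1) by auto
  then have "successively (linkR G) ((x', y) # a # as)" unfolding linkR_def by simp
  moreover have "linkR G (last ((x', y) # a # as)) (x, y'')" using a1(2) unfolding linkR_def by simp
  ultimately show ?thesis unfolding Cons by (rule conjI)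
qed

lemma pathR_halves:
  assumes "successively (linkR G) (a # xs @ [b])" "p \<in> set xs"
  shows "(\<exists>e\<in>gedges G. fst p \<in> e) \<and> (\<exists>e\<in>gedges G. snd p \<in> e)"
  using assms
proof (induction xs arbitrary: a)
  case Nil then show ?case by simp
next
  case (Cons p' xs')
  have l1: "linkR G a p'" and s': "successively (linkR G) (p' # xs' @ [b])" using Cons.prems(1) by auto
  have l2: "linkR G p' (hd (xs' @ [b]))" using s' by (cases xs') auto
  show ?case
  proof (cases "p = p'")
    case True then show ?thesis using l1 l2 unfolding linkR_def by blast
  next
    case False then have "p \<in> set xs'" using Cons.prems(2) by simp
    then show ?thesis using Cons.IH[OF s'] by blast
  qed
qed

lemma pathR_ends:
  assumes "successively (linkR G) ((y, y) # arc @ [(x, x)])"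
  shows "\<exists>e\<in>gedges G. y \<in> e" "\<exists>e\<in>gedges G. x \<in> e"
proof -
  have "arc @ [(x, x)] \<noteq> []" by simp
  then have "linkR G (y, y) (hd (arc @ [(x, x)]))" using assms unfolding successively_Cons by blast
  then show "\<exists>e\<in>gedges G. y \<in> e" unfolding linkR_def
    by (intro bexI[of _ "{snd (y, y), fst (hd (arc @ [(x, x)]))}"]) simp_all
  have "successively (linkR G) (((y, y) # arc) @ [(x, x)])" using assms by simp
  then have "linkR G (last ((y, y) # arc)) (x, x)" unfolding successively_append_iff by simp
  then show "\<exists>e\<in>gedges G. x \<in> e" unfolding linkR_def
    by (intro bexI[of _ "{snd (last ((y, y) # arc)), fst (x, x)}"]) simp_all
qed

context setting begin

lemma tau_halves: "t \<in> tau F P \<Longrightarrow> s \<in> t \<Longrightarrow> \<exists>C\<in>P. s \<in> trans_of C"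
proof -
  assume "t \<in> tau F P" "s \<in> t"
  then have "s \<in> \<Union>(trans_of ` P)" unfolding tau_def by auto
  then show ?thesis by simp
qed

end

context setting begin

lemma tau_pair:
  assumes "{a, b} \<in> tau F P"
  shows "a \<noteq> b \<and> a \<inter> b = {} \<and> (\<exists>vt. a \<union> b = {h\<in>H. ginc F h = vt}) \<and> (\<exists>C\<in>P. a \<in> trans_of C) \<and> (\<exists>C\<in>P. b \<in> trans_of C)"
proof -
  obtain vt s1 s2 C1 C2 where tp: "{a, b} = {s1, s2}" "s1 \<noteq> s2" "s1 \<inter> s2 = {}" "s1 \<union> s2 = {h\<in>H. ginc F h = vt}"
    "C1 \<in> P" "s1 \<in> trans_of C1" "C2 \<in> P" "s2 \<in> trans_of C2" "vt \<in> gverts F"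
    by (rule tau_props[OF assms])
  have "(a = s1 \<and> b = s2) \<or> (a = s2 \<and> b = s1)" using tp(1) tp(2) by (auto simp: doubleton_eq_iff)
  then show ?thesis
  proof
    assume ab: "a = s1 \<and> b = s2"
    have "a \<noteq> b" "a \<inter> b = {}" "a \<union> b = {h\<in>H. ginc F h = vt}" using ab tp(2) tp(3) tp(4) by simp_all
    moreover have "\<exists>C\<in>P. a \<in> trans_of C" using ab tp(5) tp(6) by blast
    moreover have "\<exists>C\<in>P. b \<in> trans_of C" using ab tp(7) tp(8) by blast
    ultimately show ?thesis by (intro conjI exI) 
  next
    assume ab: "a = s2 \<and> b = s1"
    have "a \<noteq> b" "a \<inter> b = {}" "a \<union> b = {h\<in>H. ginc F h = vt}" using ab tp(2) tp(3) tp(4)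
      by (simp_all add: Int_commute Un_commute)
    moreover have "\<exists>C\<in>P. a \<in> trans_of C" using ab tp(7) tp(8) by blast
    moreover have "\<exists>C\<in>P. b \<in> trans_of C" using ab tp(5) tp(6) by blast
    ultimately show ?thesis by (intro conjI exI) 
  qed
qed

lemma lift:
  assumes nb: "nb_walk T ts"
  shows "\<exists>W. closed_walk FE W \<and> proj P W = ts"
proof (cases "ts = []")
  case True
  have "closed_walk FE []" unfolding closed_walk_def by simp
  moreover have "proj P [] = []" unfolding proj_def by simp
  ultimately show ?thesis using True by blast
next
  case False
  define n where "n = length ts"
  have n0: "n > 0" using False unfolding n_def by simp
  define u where "u i = fst (ts!i)" for i
  define v where "v i = snd (ts!i)" for i
  have tw: "trav_closed_walk T ts" using nb unfolding nb_walk_def by blast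
  have nbc: "v i \<noteq> u (Suc i mod n)" if "i < n" for i using nb that unfolding nb_walk_def u_def v_def n_def by blast
  have edge: "{u i, v i} \<in> tau F P" if "i < n" for i
  proof -
    have "ts!i \<in> set ts" using that unfolding n_def by simp
    then show ?thesis using tw unfolding trav_closed_walk_def tch_simps u_def v_def by (auto simp: case_prod_beta)
  qed
  have cyc: "ginc T (v i) = ginc T (u (Suc i mod n))" if "i < n" for i
    using tw that unfolding trav_closed_walk_def u_def v_def n_def by blast
  define Rel where "Rel i A = (fst A \<in> v i \<and> snd (snd A) \<in> u (Suc i mod n) \<and>
     successively (linkR FE) ((fst A, fst A) # fst (snd A) @ [(snd (snd A), snd (snd A))]) \<and>
     (\<forall>p\<in>set (fst (snd A)). fst p \<noteq> snd p \<and> ginc F (fst p) = ginc F (snd p) \<and> st (fst p) = st (snd p)))"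
    for i and A :: "'h \<times> ('h \<times> 'h) list \<times> 'h"
  have "\<exists>A. Rel i A" if i: "i \<in> {..<n}" for i
  proof -
    have i': "i < n" "Suc i mod n < n" using i by (auto simp: suc_mod_lt)
    obtain C where C: "C \<in> P" "v i \<in> trans_of C" using tau_pair[OF edge[OF i'(1)]] by blast
    obtain C' where C': "C' \<in> P" "u (Suc i mod n) \<in> trans_of C'" using tau_pair[OF edge[OF i'(2)]] by blast
    have "C = C'" using cyc[OF i'(1)] tch_ginc[OF C] tch_ginc[OF C'] by simp
    then have uC: "u (Suc i mod n) \<in> trans_of C" using C' by simp
    obtain w where w: "closed_walk F w" "w \<noteq> []" "distinct (walk_halfs w)" "trans_of C = (\<lambda>(a, b). {a, b}) ` set w"
      "\<forall>i. Suc i < length w \<longrightarrow> {snd (w!i), fst (w!Suc i)} \<notin> E"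
      using good_walk[OF C(1)] by blast
    obtain y arc x where yax: "y \<in> v i" "x \<in> u (Suc i mod n)" "successively (linkR FE) ((y, y) # arc @ [(x, x)])"
      "\<forall>p\<in>set arc. fst p \<noteq> snd p \<and> ginc F (fst p) = ginc F (snd p) \<and> st (fst p) = st (snd p)"
      using arc[OF C(1) w(1) w(3) w(4) w(5) C(2) uC nbc[OF i'(1)]] by blast
    show ?thesis unfolding Rel_def using yax by (intro exI[of _ "(y, arc, x)"]) simp
  qed
  then obtain A where A: "\<forall>i\<in>{..<n}. Rel i (A i)" using bchoice[of "{..<n}" Rel] by blast
  define Y where "Y i = fst (A i)" for i
  define AR where "AR i = fst (snd (A i))" for i
  define X where "X i = snd (snd (A i))" for i
  have Ai: "Y i \<in> v i" "X i \<in> u (Suc i mod n)" "successively (linkR FE) ((Y i, Y i) # AR i @ [(X i, X i)])"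
    "\<forall>p\<in>set (AR i). fst p \<noteq> snd p \<and> ginc F (fst p) = ginc F (snd p) \<and> st (fst p) = st (snd p)"
    if "i < n" for i using A that unfolding Rel_def Y_def AR_def X_def by auto
  define pr where "pr i = (if i = 0 then n - 1 else i - 1)" for i
  have pr: "pr i < n" "Suc (pr i) mod n = i" if "i < n" for i
    using that n0 unfolding pr_def by auto
  define seg where "seg i = (X (pr i), Y i) # AR i" for i
  define W where "W = concat (map seg [0..<n])"
  have segs: "successively (linkR FE) (seg i) \<and> linkR FE (last (seg i)) (X i, y'')" if "i < n" for i y''
    unfolding seg_def by (rule pathR_seg[OF Ai(3)[OF that]])
  have Xu: "X (pr i) \<in> u i" if "i < n" for i using Ai(2)[OF pr(1)[OF that]] pr(2)[OF that] by simp
  have cross: "X (pr i) \<in> ghalfs FE \<and> Y i \<in> ghalfs FE \<and> X (pr i) \<noteq> Y i \<and> ginc F (X (pr i)) = ginc F (Y i)"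
    if iN: "i < n" for i
  proof -
    obtain vt where tp: "u i \<inter> v i = {}" "u i \<union> v i = {h\<in>H. ginc F h = vt}"
      using tau_pair[OF edge[OF iN]] by blast
    have "X (pr i) \<noteq> Y i"
    proof
      assume "X (pr i) = Y i"
      then have "Y i \<in> u i \<inter> v i" using Xu[OF iN] Ai(1)[OF iN] by simp
      then show False using tp(1) by simp
    qed
    moreover have "X (pr i) \<in> {h\<in>H. ginc F h = vt}" "Y i \<in> {h\<in>H. ginc F h = vt}"
      unfolding tp(2)[symmetric] using Xu[OF iN] Ai(1)[OF iN] by simp_all
    then have "ginc F (X (pr i)) = vt" "ginc F (Y i) = vt" by simp_all
    moreover have "Y i \<in> ghalfs FE"
    proof -
      obtain e where "e \<in> gedges FE" "Y i \<in> e" using pathR_ends(1)[OF Ai(3)[OF iN]] by blast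
      then show ?thesis by (rule half_FE)
    qed
    moreover have "X (pr i) \<in> ghalfs FE"
    proof -
      obtain e where "e \<in> gedges FE" "X (pr i) \<in> e" using pathR_ends(2)[OF Ai(3)[OF pr(1)[OF iN]]] by blast
      then show ?thesis by (rule half_FE)
    qed
    ultimately show ?thesis by simp
  qed
  have arcs: "a \<in> ghalfs FE \<and> b \<in> ghalfs FE \<and> a \<noteq> b \<and> ginc F a = ginc F b \<and> st a = st b"
    if "i < n" "(a, b) \<in> set (AR i)" for i a b
  proof -
    have "(\<exists>e\<in>gedges FE. fst (a, b) \<in> e) \<and> (\<exists>e\<in>gedges FE. snd (a, b) \<in> e)"
      by (rule pathR_halves[OF Ai(3)[OF that(1)] that(2)])
    then obtain e1 e2 where "e1 \<in> gedges FE" "a \<in> e1" "e2 \<in> gedges FE" "b \<in> e2" by auto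
    then have "a \<in> ghalfs FE" "b \<in> ghalfs FE" using half_FE by blast+
    moreover have "fst (a, b) \<noteq> snd (a, b) \<and> ginc F (fst (a, b)) = ginc F (snd (a, b)) \<and> st (fst (a, b)) = st (snd (a, b))"
      using Ai(4)[OF that(1)] that(2) by blast
    ultimately show ?thesis by simp
  qed
  have cw1: "\<forall>(a, b)\<in>set W. a \<in> ghalfs FE \<and> b \<in> ghalfs FE \<and> a \<noteq> b \<and> ginc FE a = ginc FE b"
  proof
    fix p assume "p \<in> set W"
    then obtain i where i: "i < n" "p \<in> set (seg i)" unfolding W_def by auto
    obtain a b where ab: "p = (a, b)" by fastforce
    have "a \<in> ghalfs FE \<and> b \<in> ghalfs FE \<and> a \<noteq> b \<and> ginc F a = ginc F b"
    proof (cases "p = (X (pr i), Y i)")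
      case True then show ?thesis using cross[OF i(1)] ab by simp
    next
      case False
      have "p = (X (pr i), Y i) \<or> p \<in> set (AR i)" using i(2) unfolding seg_def by simp
      then have "(a, b) \<in> set (AR i)" using False ab by blast
      then show ?thesis using arcs[OF i(1)] by blast
    qed
    then show "case p of (a, b) \<Rightarrow> a \<in> ghalfs FE \<and> b \<in> ghalfs FE \<and> a \<noteq> b \<and> ginc FE a = ginc FE b"
      unfolding ab FE_simps by simp
  qed
  have cs: "successively (linkR FE) W \<and> (n > 0 \<longrightarrow> W \<noteq> [] \<and> hd W = hd (seg 0) \<and> last W = last (seg (n - 1)))"
    unfolding W_def
  proof (rule concat_succ)
    show "\<forall>i<n. seg i \<noteq> [] \<and> successively (linkR FE) (seg i)" using segs unfolding seg_def by blast
    show "\<forall>i. Suc i < n \<longrightarrow> linkR FE (last (seg i)) (hd (seg (Suc i)))"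
    proof (intro allI impI)
      fix i assume i: "Suc i < n"
      have "pr (Suc i) = i" unfolding pr_def by simp
      then have "hd (seg (Suc i)) = (X i, Y (Suc i))" unfolding seg_def by simp
      then show "linkR FE (last (seg i)) (hd (seg (Suc i)))" using segs[of i] i by simp
    qed
  qed
  have wrap: "linkR FE (last W) (hd W)"
  proof -
    have "pr 0 = n - 1" unfolding pr_def by simp
    then have "hd (seg 0) = (X (n - 1), Y 0)" unfolding seg_def by simp
    moreover have "n - 1 < n" using n0 by simp
    ultimately show ?thesis using cs n0 segs[of "n - 1"] by simp
  qed
  have "closed_walk FE W"
    unfolding closed_walk_def
  proof (intro conjI cw1)
    have "\<forall>i<length W. linkR FE (W!i) (W!(Suc i mod length W))"
      unfolding cyc_iff[where R="linkR FE"] using cs wrap by blast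
    then show "\<forall>i<length W. {snd (W!i), fst (W!(Suc i mod length W))} \<in> gedges FE"
      unfolding linkR_def by blast
  qed
  moreover have "proj P W = ts"
  proof -
    have ps: "proj P (seg i) = [ts!i]" if i: "i < n" for i
    proof -
      have "proj P (AR i) = []" unfolding proj_def using arcs[OF i] by (auto simp: filter_empty_conv)
      obtain Cu where Cu: "Cu \<in> P" "u i \<in> trans_of Cu" using tau_pair[OF edge[OF i]] by blast
      obtain Cv where Cv: "Cv \<in> P" "v i \<in> trans_of Cv" using tau_pair[OF edge[OF i]] by blast
      have "st (X (pr i)) = u i" by (rule st_of_eq[OF Cu Xu[OF i]])
      moreover have "st (Y i) = v i" by (rule st_of_eq[OF Cv Ai(1)[OF i]])
      moreover have "u i \<noteq> v i" using tau_pair[OF edge[OF i]] by blast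
      moreover have "seg i = [(X (pr i), Y i)] @ AR i" unfolding seg_def by simp
      ultimately show ?thesis using \<open>proj P (AR i) = []\<close> unfolding proj_append
        by (simp add: proj_def u_def v_def case_prod_beta)
    qed
    have "proj P W = concat (map (\<lambda>i. proj P (seg i)) [0..<n])" unfolding W_def proj_concat map_map comp_def ..
    also have "\<dots> = concat (map (\<lambda>i. [ts!i]) [0..<n])" by (rule arg_cong[where f=concat], rule map_cong) (auto simp: ps)
    also have "\<dots> = ts" unfolding concat_singletons n_def by (rule map_nth)
    finally show ?thesis .
  qed
  ultimately show ?thesis by blast
qed

end

context setting begin

lemma cw_sigma_cs:
  assumes "closed_walk FE W" "orientation FE D'"
  shows "rat_vec (sigma FE D' W) \<in> cycle_space FE D'"
proof -
  have c2: "\<forall>e\<in>gedges FE. card e = 2" using edge_props unfolding FE_simps by blast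
  show ?thesis unfolding sigma_def by (rule trav_cycle_space[OF cw_etrav_tw[OF assms(1)] assms(2) c2])
qed

lemma proj_in_cs:
  assumes "closed_walk FE W" "orientation T D"
  shows "rat_vec (sigma_trav T D (proj P W)) \<in> cycle_space T D"
proof -
  have c2: "\<forall>e\<in>gedges T. card e = 2" using gwf_T unfolding gwf_def by blast
  show ?thesis by (rule trav_cycle_space[OF proj_tw[OF assms(1)] assms(2) c2])
qed

lemma exists_orient_FE: "\<exists>D'. orientation FE D'"
proof -
  have "(SOME h. h \<in> e) \<in> e" if "e \<in> gedges FE" for e
  proof -
    have "card e = 2" using that edge_props unfolding FE_simps by blast
    then have "e \<noteq> {}" by auto
    then obtain h where "h \<in> e" by blast
    then show ?thesis by (rule someI)
  qed
  then show ?thesis unfolding orientation_def by (intro exI[of _ "\<lambda>e. SOME h. h \<in> e"]) blast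
qed

lemma sigma_trav_Nil: "sigma_trav G D [] = 0"
  unfolding sigma_trav_def by (simp add: fun_eq_iff)

lemma span_part:
  assumes G: "cycle_spanning_set FE (closed_walk FE) (sigma FE) \<Gamma>"
  shows "cycle_spanning_set T (trav_closed_walk T) (sigma_trav T) (proj P ` remove_circuits \<Gamma> P)"
proof -
  define \<Gamma>' where "\<Gamma>' = proj P ` remove_circuits \<Gamma> P"
  have cwG: "\<forall>W\<in>\<Gamma>. closed_walk FE W" using G unfolding cycle_spanning_set_def by blast
  have cwG': "\<forall>W'\<in>\<Gamma>'. trav_closed_walk T W'"
  proof
    fix W' assume "W' \<in> \<Gamma>'"
    then obtain W where "W \<in> \<Gamma>" "W' = proj P W" unfolding \<Gamma>'_def remove_circuits_def by blast
    then show "trav_closed_walk T W'" using cwG proj_tw by blast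
  qed
  have bas: "\<exists>B\<subseteq>\<Gamma>'. inj_on (sigma_trav T D) B \<and> is_basis_of_cycle_space T D ((\<lambda>W. rat_vec (sigma_trav T D W)) ` B)"
    if D: "orientation T D" for D
  proof -
    obtain D' where D': "orientation FE D'" using exists_orient_FE by blast
    obtain BF where BF: "BF \<subseteq> \<Gamma>" "is_basis_of_cycle_space FE D' ((\<lambda>W. rat_vec (sigma FE D' W)) ` BF)"
      using G D' unfolding cycle_spanning_set_def by blast
    define rv where "rv W' = rat_vec (sigma_trav T D W')" for W'
    define V where "V = rv ` \<Gamma>'"
    have Vcs: "V \<subseteq> cycle_space T D"
    proof
      fix x assume "x \<in> V"
      then obtain W where "W \<in> \<Gamma>" "x = rv (proj P W)" unfolding V_def \<Gamma>'_def remove_circuits_def by blast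
      then show "x \<in> cycle_space T D" unfolding rv_def using cwG proj_in_cs[OF _ D] by blast
    qed
    have csF: "cycle_space FE D' \<subseteq> fv.span ((\<lambda>W. rat_vec (sigma FE D' W)) ` \<Gamma>)"
    proof -
      have "cycle_space FE D' \<subseteq> fv.span ((\<lambda>W. rat_vec (sigma FE D' W)) ` BF)"
        using BF(2) unfolding is_basis_of_cycle_space_def rat_span_eq by blast
      also have "\<dots> \<subseteq> fv.span ((\<lambda>W. rat_vec (sigma FE D' W)) ` \<Gamma>)"
        using BF(1) by (intro fv.span_mono image_mono)
      finally show ?thesis .
    qed
    have img: "Lq D D' ` (\<lambda>W. rat_vec (sigma FE D' W)) ` \<Gamma> \<subseteq> insert 0 V"
    proof
      fix y assume "y \<in> Lq D D' ` (\<lambda>W. rat_vec (sigma FE D' W)) ` \<Gamma>"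
      then obtain W0 where W0: "W0 \<in> \<Gamma>" "y = Lq D D' (rat_vec (sigma FE D' W0))" by blast
      have "y = rv (proj P W0)"
        unfolding W0(2) rv_def sig_L[OF bspec[OF cwG W0(1)] D D'] rat_vec_Lint ..
      show "y \<in> insert 0 V"
      proof (cases "W0 \<in> remove_circuits \<Gamma> P")
        case True then show ?thesis using \<open>y = rv (proj P W0)\<close> unfolding V_def \<Gamma>'_def by blast
      next
        case False
        then obtain C where "C \<in> P" "W0 \<in> C" using W0(1) unfolding remove_circuits_def by blast
        then have "proj P W0 = []" by (rule proj_circ)
        moreover have "rat_vec (sigma_trav T D []) = 0" unfolding sigma_trav_def rat_vec_def by (simp add: fun_eq_iff)
        ultimately have "y = 0" using \<open>y = rv (proj P W0)\<close> unfolding rv_def by simp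
        then show ?thesis by simp
      qed
    qed
    have spanV0: "fv.span (insert 0 V) \<subseteq> fv.span V"
      by (rule fv.span_minimal) (auto simp: fv.span_zero fv.span_superset fv.subspace_span)
    have Ncs: "rat_vec (sigma_trav T D ts) \<in> fv.span V" if ts: "nb_walk T ts" for ts
    proof -
      obtain W where W: "closed_walk FE W" "proj P W = ts" using lift[OF ts] by blast
      have "rat_vec (sigma_trav T D ts) = Lq D D' (rat_vec (sigma FE D' W))"
        unfolding W(2)[symmetric] sig_L[OF W(1) D D'] rat_vec_Lint ..
      moreover have "rat_vec (sigma FE D' W) \<in> fv.span ((\<lambda>W. rat_vec (sigma FE D' W)) ` \<Gamma>)"
        using csF cw_sigma_cs[OF W(1) D'] by blast
      ultimately have "rat_vec (sigma_trav T D ts) \<in> Lq D D' ` fv.span ((\<lambda>W. rat_vec (sigma FE D' W)) ` \<Gamma>)" by blast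
      also have "\<dots> = fv.span (Lq D D' ` (\<lambda>W. rat_vec (sigma FE D' W)) ` \<Gamma>)"
        by (rule module_hom.span_image[OF Lq_hom, symmetric])
      also have "\<dots> \<subseteq> fv.span (insert 0 V)" using img by (rule fv.span_mono)
      finally show ?thesis using spanV0 by blast
    qed
    have csT: "cycle_space T D \<subseteq> fv.span V"
    proof
      fix x assume "x \<in> cycle_space T D"
      then have "x \<in> fv.span {rat_vec (sigma_trav T D ts) | ts. nb_walk T ts}"
        by (rule cycle_space_span[OF gwf_T D])
      moreover have "fv.span {rat_vec (sigma_trav T D ts) | ts. nb_walk T ts} \<subseteq> fv.span V"
        by (rule fv.span_minimal) (use Ncs fv.subspace_span in auto)
      ultimately show "x \<in> fv.span V" by blast
    qed
    obtain B where B: "B \<subseteq> V" "fv.independent B" "V \<subseteq> fv.span B"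
      by (rule fv.maximal_independent_subset)
    have "fv.span V \<subseteq> fv.span B" by (rule fv.span_minimal[OF B(3) fv.subspace_span])
    then have csB: "cycle_space T D \<subseteq> fv.span B" using csT by blast
    define pick where "pick b = (SOME W'. W' \<in> \<Gamma>' \<and> rv W' = b)" for b
    have pick: "pick b \<in> \<Gamma>' \<and> rv (pick b) = b" if "b \<in> B" for b
    proof -
      have "\<exists>W'. W' \<in> \<Gamma>' \<and> rv W' = b" using that B(1) unfolding V_def by blast
      then show ?thesis unfolding pick_def by (rule someI_ex)
    qed
    define Bw where "Bw = pick ` B"
    have "Bw \<subseteq> \<Gamma>'" unfolding Bw_def using pick by blast
    moreover have "inj_on (sigma_trav T D) Bw"
    proof (rule inj_onI)
      fix W1 W2 assume a: "W1 \<in> Bw" "W2 \<in> Bw" "sigma_trav T D W1 = sigma_trav T D W2"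
      then obtain b1 b2 where b: "b1 \<in> B" "W1 = pick b1" "b2 \<in> B" "W2 = pick b2" unfolding Bw_def by blast
      have "b1 = rv W1" using pick[OF b(1)] b(2) by simp
      also have "\<dots> = rv W2" unfolding rv_def using a(3) by simp
      also have "\<dots> = b2" using pick[OF b(3)] b(4) by simp
      finally show "W1 = W2" using b by simp
    qed
    moreover have "(\<lambda>W. rat_vec (sigma_trav T D W)) ` Bw = B"
    proof -
      have "(\<lambda>W. rat_vec (sigma_trav T D W)) ` Bw = (\<lambda>b. rv (pick b)) ` B"
        unfolding Bw_def rv_def image_image ..
      also have "\<dots> = id ` B" by (rule image_cong) (use pick in auto)
      also have "\<dots> = B" by simp
      finally show ?thesis .
    qed
    moreover have "is_basis_of_cycle_space T D B"
      unfolding is_basis_of_cycle_space_def rat_lin_indep_eq rat_span_eq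
      using B(1) B(2) Vcs csB by blast
    ultimately show ?thesis by (intro exI[of _ Bw]) simp
  qed
  show ?thesis unfolding cycle_spanning_set_def \<Gamma>'_def[symmetric] using cwG' bas by blast
qed

end

context setting begin

lemma int_part:
  assumes cwG: "\<forall>W\<in>\<Gamma>. closed_walk FE W" and I: "integral_set FE (sigma FE) \<Gamma>"
  shows "integral_set T (sigma_trav T) (proj P ` remove_circuits \<Gamma> P)"
  unfolding integral_set_def
proof (intro allI impI)
  define \<Gamma>' where "\<Gamma>' = proj P ` remove_circuits \<Gamma> P"
  fix D W' assume D: "orientation T D" and W': "closed_walk T W'"
  obtain D' where D': "orientation FE D'" using exists_orient_FE by blast
  obtain W where W: "closed_walk FE W" "proj P W = etrav W'" using lift[OF cw_etrav_nb[OF W']] by blast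
  have eq: "sigma T D W' = Lint D D' (sigma FE D' W)"
    unfolding sigma_def W(2)[symmetric] sig_L[OF W(1) D D'] ..
  have img: "Lint D D' ` sigma FE D' ` \<Gamma> \<subseteq> insert 0 (sigma_trav T D ` \<Gamma>')"
  proof
    fix y assume "y \<in> Lint D D' ` sigma FE D' ` \<Gamma>"
    then obtain W0 where W0: "W0 \<in> \<Gamma>" "y = Lint D D' (sigma FE D' W0)" by blast
    have y: "y = sigma_trav T D (proj P W0)"
      unfolding W0(2) sig_L[OF bspec[OF cwG W0(1)] D D'] ..
    show "y \<in> insert 0 (sigma_trav T D ` \<Gamma>')"
    proof (cases "W0 \<in> remove_circuits \<Gamma> P")
      case True then show ?thesis using y unfolding \<Gamma>'_def by blast
    next
      case False
      then obtain C where "C \<in> P" "W0 \<in> C" using W0(1) unfolding remove_circuits_def by blast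
      then have "proj P W0 = []" by (rule proj_circ)
      then have "y = 0" using y sigma_trav_Nil by simp
      then show ?thesis by simp
    qed
  qed
  have "sigma FE D' W \<in> fm.span (sigma FE D' ` \<Gamma>)"
    using I D' W(1) unfolding integral_set_def int_span_eq by blast
  then have "Lint D D' (sigma FE D' W) \<in> Lint D D' ` fm.span (sigma FE D' ` \<Gamma>)" by blast
  also have "\<dots> = fm.span (Lint D D' ` sigma FE D' ` \<Gamma>)"
    by (rule module_hom.span_image[OF Lint_hom, symmetric])
  also have "\<dots> \<subseteq> fm.span (insert 0 (sigma_trav T D ` \<Gamma>'))" using img by (rule fm.span_mono)
  also have "\<dots> \<subseteq> fm.span (sigma_trav T D ` \<Gamma>')"
    by (rule fm.span_minimal) (auto simp: fm.span_zero fm.span_superset fm.subspace_span)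
  finally show "sigma T D W' \<in> int_span (sigma_trav T D ` (proj P ` remove_circuits \<Gamma> P))"
    unfolding eq int_span_eq \<Gamma>'_def .
qed

end

theorem mainTheorem7:
  fixes F :: "('v, 'h) graph"
    and P :: "('h \<times> 'h) list set set"
    and E :: "'h set set"
    and \<Gamma> :: "('h \<times> 'h) list set"
  assumes "wf_graph F"
    and "four_regular F"
    and "circuit_partition F P"
    and "E \<subseteq> gedges F"
    and "\<forall>C\<in>P. card (traversed C \<inter> E) \<le> 1"
    and "cycle_spanning_set (del_edges F E) (closed_walk (del_edges F E))
           (sigma (del_edges F E)) \<Gamma>"
  shows "cycle_spanning_set (Tch F P) (trav_closed_walk (Tch F P))
           (sigma_trav (Tch F P)) (proj P ` remove_circuits \<Gamma> P)
         \<and> (integral_set (del_edges F E) (sigma (del_edges F E)) \<Gamma> \<longrightarrow>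
              integral_set (Tch F P) (sigma_trav (Tch F P)) (proj P ` remove_circuits \<Gamma> P))"
proof -
  interpret setting F P E using assms(1-5) by unfold_locales
  have cwG: "\<forall>W\<in>\<Gamma>. closed_walk (del_edges F E) W" using assms(6) unfolding cycle_spanning_set_def by blast
  show ?thesis using span_part[OF assms(6)] int_part[OF cwG] by blast
qed

end
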